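(* Let $\mathcal A$ be a cluster algebra and let $H_1,H_2$ be subgroups of $\mathrm{Aut}\,\mathcal A$ with $H_1,H_2\notin\ker\phi$, i.e. $\mathcal M^{H_1}_{sub}\neq\emptyset$ and $\mathcal M^{H_2}_{sub}\neq\emptyset$. Then $H_1$ and $H_2$ are conjugate in $\mathrm{Aut}\,\mathcal A$ if and only if there exist $f\in\mathrm{Aut}\,\mathcal A$, $\mathcal A(\Sigma_1)\in\mathcal M^{H_1}_{sub}$ and $\mathcal A(\Sigma_2)\in\mathcal M^{H_2}_{sub}$ such that $f(\mathcal A(\Sigma_1))=\mathcal A(\Sigma_2)$ and the restriction of $f$ is a cluster isomorphism $\mathcal A(\Sigma_1)\to\mathcal A(\Sigma_2)$.
   Context: Cluster algebras: a seed is $\Sigma=(\mathbf x_{ex},\mathbf x_{fr},\widetilde B)$ with exchange variables $\mathbf x_{ex}=\{x_1,\dots,x_n\}$ and frozen variables $\mathbf x_{fr}=\{x_{n+1},\dots,x_m\}$ algebraically independent in $\mathcal F=\mathbb Q(x_1,\dots,x_m)$, and $\widetilde B=(b_{ij})$ an $m\times n$ integer matrix whose upper $n\times n$ part is skew-symmetrizable; entries are also indexed by variables, $b_{xy}$. Seeds mutate by the Fomin–Zelevinsky mutation rule at exchange variables; the cluster algebra $\mathcal A(\Sigma)$ is the $\mathbb Q$-subalgebra of $\mathcal F$ generated by all (exchange and frozen) cluster variables of all seeds obtained from $\Sigma$ by finitely many mutations. A cluster automorphism (resp. cluster isomorphism) is an algebra automorphism (resp. isomorphism) sending the extended cluster $\mathbf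 x_{ex}\cup\mathbf x_{fr}$ of a seed bijectively onto the extended cluster of a seed, exchange variables to exchange variables, and commuting with mutations ($f(\mu_x(y))=\mu_{f(x)}(f(y))$ along admissible mutation sequences); $\mathrm{Aut}\,\mathcal A$ is the group of cluster automorphisms. Mixing-type sub-seed: for a seed $\Sigma$ and $I_0\subseteq\mathbf x_{ex}$, $I_1\subseteq\mathbf x_{ex}\cup\mathbf x_{fr}$ with $I_0\cap I_1=\emptyset$, $\Sigma_{I_0,I_1}=(\mathbf x_{ex}\setminus(I_0\cup I_1),(\mathbf x_{fr}\cup I_0)\setminus I_1,\widetilde B^\sharp)$ where $\widetilde B^\sharp$ is the submatrix of $\widetilde B$ with rows indexed by the new extended cluster and columns by the new exchange variables. A cluster subalgebra of $\mathcal A$ is $\mathcal A(\Sigma')\subseteq\mathcal A$ with $\Sigma'=\Sigma_{I_0,I_1}$ for some seed $\Sigma$ of $\mathcal A$ such that $b_{xy}=0$ for all $x\in I_1$, $y\in\mathbf x_{ex}\setminus(I_0\cup I_1)$. Galois notions: for a cluster subalgebra $\mathcal A(\Sigma')$, $\mathrm{Gal}_{\Sigma'}\mathcal A=\{f\in\mathrm{Aut}\,\mathcal A: f|_{\mathcal A(\Sigma')}=\mathrm{id}\}$. For $H\le\mathrm{Aut}\,\mathcal A$, $\mathcal A^H=\{z\in\mathcal A: f(z)=z\ \forall f\in H\}$, and $\mathcal M^H_{sub}$ is the set of cluster subalgebras $\mathcal A(\Sigma')$ of $\mathcal A$ that are maximal (under inclusion) among cluster subalgebras of $\mathcal A$ contained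 in $\mathcal A^H$ and satisfy $\mathrm{Gal}_{\Sigma'}\mathcal A=H$. $\phi$ is the map $H\mapsto\mathcal M^H_{sub}$ and $\ker\phi=\{H\le\mathrm{Aut}\,\mathcal A:\mathcal M^H_{sub}=\emptyset\}$. *)

theory Defs
  imports Complex_Main
begin

text \<open>A seed lives in an ambient field 'a of characteristic 0 (playing the role of
F = Q(x_1,...,x_m)).  Variables are indexed by natural numbers: cl gives the
cluster variable at an index, ex is the set of exchange indices, fr the set of
frozen indices, mat the (extended) exchange matrix, read at rows in ex \<union> fr and
columns in ex.\<close>

record 'a seed =
  cl  :: "nat \<Rightarrow> 'a"
  ex  :: "nat set"
  fr  :: "nat set"
  mat :: "nat \<Rightarrow> nat \<Rightarrow> int"

definition ext :: "'a seed \<Rightarrow> nat set" where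
  "ext S = ex S \<union> fr S"

definition alg_indep :: "(nat \<Rightarrow> 'a::field_char_0) \<Rightarrow> nat set \<Rightarrow> bool" where
  "alg_indep x I \<longleftrightarrow>
     (\<forall>(M :: (nat \<Rightarrow> nat) set) (c :: (nat \<Rightarrow> nat) \<Rightarrow> rat).
        finite M \<longrightarrow> (\<forall>e\<in>M. \<forall>i. i \<notin> I \<longrightarrow> e i = 0) \<longrightarrow>
        (\<Sum>e\<in>M. of_rat (c e) * (\<Prod>i\<in>I. x i ^ e i)) = 0 \<longrightarrow>
        (\<forall>e\<in>M. c e = 0))"

definition skew_symmetrizable :: "nat set \<Rightarrow> (nat \<Rightarrow> nat \<Rightarrow> int) \<Rightarrow> bool" where
  "skew_symmetrizable E B \<longleftrightarrow>
     (\<exists>d :: nat \<Rightarrow> int. (\<forall>i\<in>E. d i > 0) \<and>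
        (\<forall>i\<in>E. \<forall>j\<in>E. d i * B i j = - (d j * B j i)))"

definition valid_seed :: "('a::field_char_0) seed \<Rightarrow> bool" where
  "valid_seed S \<longleftrightarrow> finite (ex S) \<and> finite (fr S) \<and> ex S \<inter> fr S = {} \<and>
     alg_indep (cl S) (ext S) \<and> skew_symmetrizable (ex S) (mat S)"

definition mutate :: "nat \<Rightarrow> ('a::field_char_0) seed \<Rightarrow> 'a seed" where
  "mutate k S =
     S\<lparr> cl := (cl S)(k :=
           ((\<Prod>i\<in>{i\<in>ext S. mat S i k > 0}. cl S i ^ nat (mat S i k)) +
            (\<Prod>i\<in>{i\<in>ext S. mat S i k < 0}. cl S i ^ nat (- mat S i k))) / cl S k),
        mat := (\<lambda>i j. if i = k \<or> j = k then - mat S i j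
                      else mat S i j +
                        (\<bar>mat S i k\<bar> * mat S k j + mat S i k * \<bar>mat S k j\<bar>) div 2) \<rparr>"

definition mutseq :: "nat list \<Rightarrow> ('a::field_char_0) seed \<Rightarrow> 'a seed" where
  "mutseq ks S = fold mutate ks S"

definition mclass :: "('a::field_char_0) seed \<Rightarrow> 'a seed set" where
  "mclass S = {mutseq ks S | ks. set ks \<subseteq> ex S}"

definition cvars :: "('a::field_char_0) seed \<Rightarrow> 'a set" where
  "cvars S = (\<Union>T\<in>mclass S. cl T ` ext T)"

inductive_set qalg :: "('a::field_char_0) set \<Rightarrow> 'a set" for G where
  gen: "x \<in> G \<Longrightarrow> x \<in> qalg G"
| rat: "of_rat q \<in> qalg G"
| add: "x \<in> qalg G \<Longrightarrow> y \<in> qalg G \<Longrightarrow> x + y \<in> qalg G"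
| mult: "x \<in> qalg G \<Longrightarrow> y \<in> qalg G \<Longrightarrow> x * y \<in> qalg G"

definition cluster_alg :: "('a::field_char_0) seed \<Rightarrow> 'a set" where
  "cluster_alg S = qalg (cvars S)"

definition cluster_iso :: "('a::field_char_0) seed \<Rightarrow> 'a seed \<Rightarrow> ('a \<Rightarrow> 'a) \<Rightarrow> bool" where
  "cluster_iso S1 S2 f \<longleftrightarrow>
     bij_betw f (cluster_alg S1) (cluster_alg S2) \<and>
     (\<forall>x\<in>cluster_alg S1. \<forall>y\<in>cluster_alg S1. f (x + y) = f x + f y \<and> f (x * y) = f x * f y) \<and>
     f 1 = 1 \<and>
     (\<exists>T\<in>mclass S1. \<exists>T'\<in>mclass S2. \<exists>\<sigma>.
        bij_betw \<sigma> (ext T) (ext T') \<and> \<sigma> ` ex T = ex T' \<and>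
        (\<forall>ks. set ks \<subseteq> ex T \<longrightarrow>
           (\<forall>i\<in>ext T. f (cl (mutseq ks T) i) = cl (mutseq (map \<sigma> ks) T') (\<sigma> i))))"

text \<open>Cluster automorphisms of A(S0), normalised to be the identity outside A(S0)
so that they form a group under composition.\<close>
definition Aut :: "('a::field_char_0) seed \<Rightarrow> ('a \<Rightarrow> 'a) set" where
  "Aut S0 = {f. cluster_iso S0 S0 f \<and> (\<forall>x. x \<notin> cluster_alg S0 \<longrightarrow> f x = x)}"

definition aut_inv :: "('a::field_char_0) seed \<Rightarrow> ('a \<Rightarrow> 'a) \<Rightarrow> ('a \<Rightarrow> 'a)" where
  "aut_inv S0 f = (\<lambda>y. if y \<in> cluster_alg S0 then inv_into (cluster_alg S0) f y else y)"

definition aut_subgroup :: "('a::field_char_0) seed \<Rightarrow> ('a \<Rightarrow> 'a) set \<Rightarrow> bool" where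
  "aut_subgroup S0 H \<longleftrightarrow> H \<subseteq> Aut S0 \<and> id \<in> H \<and>
     (\<forall>g\<in>H. \<forall>h\<in>H. g \<circ> h \<in> H) \<and> (\<forall>h\<in>H. aut_inv S0 h \<in> H)"

definition conjugate :: "('a::field_char_0) seed \<Rightarrow> ('a \<Rightarrow> 'a) set \<Rightarrow> ('a \<Rightarrow> 'a) set \<Rightarrow> bool" where
  "conjugate S0 H1 H2 \<longleftrightarrow> (\<exists>g\<in>Aut S0. H2 = (\<lambda>h. g \<circ> h \<circ> aut_inv S0 g) ` H1)"

definition subseed :: "'a seed \<Rightarrow> nat set \<Rightarrow> nat set \<Rightarrow> 'a seed" where
  "subseed S I0 I1 = S\<lparr> ex := ex S - (I0 \<union> I1), fr := (fr S \<union> I0) - I1 \<rparr>"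

definition cluster_subseed :: "('a::field_char_0) seed \<Rightarrow> 'a seed \<Rightarrow> bool" where
  "cluster_subseed S0 S' \<longleftrightarrow>
     (\<exists>S\<in>mclass S0. \<exists>I0 I1. I0 \<subseteq> ex S \<and> I1 \<subseteq> ext S \<and> I0 \<inter> I1 = {} \<and>
        S' = subseed S I0 I1 \<and>
        (\<forall>x\<in>I1. \<forall>y\<in>ex S'. mat S x y = 0) \<and>
        cluster_alg S' \<subseteq> cluster_alg S0)"

definition cluster_subalgs :: "('a::field_char_0) seed \<Rightarrow> 'a set set" where
  "cluster_subalgs S0 = {cluster_alg S' | S'. cluster_subseed S0 S'}"

definition Gal :: "('a::field_char_0) seed \<Rightarrow> 'a set \<Rightarrow> ('a \<Rightarrow> 'a) set" where
  "Gal S0 B = {f \<in> Aut S0. \<forall>z\<in>B. f z = z}"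

definition fixalg :: "('a::field_char_0) seed \<Rightarrow> ('a \<Rightarrow> 'a) set \<Rightarrow> 'a set" where
  "fixalg S0 H = {z \<in> cluster_alg S0. \<forall>f\<in>H. f z = z}"

definition M_sub :: "('a::field_char_0) seed \<Rightarrow> ('a \<Rightarrow> 'a) set \<Rightarrow> 'a set set" where
  "M_sub S0 H = {B \<in> cluster_subalgs S0. B \<subseteq> fixalg S0 H \<and>
      (\<forall>C\<in>cluster_subalgs S0. C \<subseteq> fixalg S0 H \<longrightarrow> B \<subseteq> C \<longrightarrow> C = B) \<and>
      Gal S0 B = H}"

end

theory Submission
  imports Defs "HOL-Library.Multiset"
begin

definition mon :: "(nat \<Rightarrow> 'a::field_char_0) \<Rightarrow> nat set \<Rightarrow> (nat \<Rightarrow> nat) \<Rightarrow> 'a" where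
  "mon x I e = (\<Prod>i\<in>I. x i ^ e i)"

definition supp_in :: "(nat \<Rightarrow> nat) \<Rightarrow> nat set \<Rightarrow> bool" where
  "supp_in e I \<longleftrightarrow> (\<forall>i. i \<notin> I \<longrightarrow> e i = 0)"

lemma sum_mset_count:
  fixes f :: "'b \<Rightarrow> 'c::comm_semiring_1"
  shows "finite S \<Longrightarrow> set_mset A \<subseteq> S \<Longrightarrow> (\<Sum>e\<in>#A. f e) = (\<Sum>e\<in>S. of_nat (count A e) * f e)"
proof (induction A)
  case empty then show ?case by simp
next
  case (add a A)
  have "(\<Sum>e\<in>S. of_nat (count (add_mset a A) e) * f e)
      = (\<Sum>e\<in>S. of_nat (count A e) * f e + (if e = a then f e else 0))"
    by (rule sum.cong) (auto simp: algebra_simps)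
  also have "\<dots> = (\<Sum>e\<in>S. of_nat (count A e) * f e) + f a"
    using add.prems by (simp add: sum.distrib)
  finally show ?case using add by (simp add: ac_simps)
qed

lemma alg_indep_mset:
  fixes x :: "nat \<Rightarrow> 'a::field_char_0"
  assumes ai: "alg_indep x I"
    and sA: "\<forall>e\<in>#A. supp_in e I" and sB: "\<forall>e\<in>#B. supp_in e I"
    and eq: "(\<Sum>e\<in>#A. mon x I e) = (\<Sum>e\<in>#B. mon x I e)"
  shows "A = B"
proof -
  define S where "S = set_mset (A + B)"
  have fS: "finite S" unfolding S_def by simp
  define c where "c e = (of_nat (count A e) - of_nat (count B e) :: rat)" for e
  have "(\<Sum>e\<in>S. of_rat (c e) * (\<Prod>i\<in>I. x i ^ e i))
       = (\<Sum>e\<in>S. of_nat (count A e) * mon x I e) - (\<Sum>e\<in>S. of_nat (count B e) * mon x I e)"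
    unfolding c_def mon_def by (simp add: of_rat_diff algebra_simps sum_subtractf)
  also have "\<dots> = 0"
    using sum_mset_count[OF fS, of A "mon x I"] sum_mset_count[OF fS, of B "mon x I"] eq
    unfolding S_def by auto
  finally have z: "(\<Sum>e\<in>S. of_rat (c e) * (\<Prod>i\<in>I. x i ^ e i)) = 0" .
  have "\<forall>e\<in>S. \<forall>i. i \<notin> I \<longrightarrow> e i = 0"
    using sA sB unfolding S_def supp_in_def by auto
  with ai fS z have "\<forall>e\<in>S. c e = 0" unfolding alg_indep_def by blast
  then have "count A e = count B e" for e
    unfolding c_def S_def by (cases "e \<in># A + B") (auto simp: not_in_iff)
  then show ?thesis by (simp add: multiset_eqI)
qed

definition delta :: "nat \<Rightarrow> nat \<Rightarrow> nat" where "delta k = (\<lambda>i. if i = k then 1 else 0)"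

lemma mono_delta: "finite I \<Longrightarrow> k \<in> I \<Longrightarrow> mon x I (delta k) = x k"
proof -
  assume "finite I" "k \<in> I"
  have "(\<Prod>i\<in>I. x i ^ (if i = k then 1 else 0)) = (\<Prod>i\<in>I. if i = k then x i else 1)"
    by (rule prod.cong) auto
  then show ?thesis unfolding mon_def delta_def using \<open>finite I\<close> \<open>k \<in> I\<close> by simp
qed

lemma alg_indep_nz:
  assumes "alg_indep x I" "finite I" "k \<in> I"
  shows "x k \<noteq> 0"
proof
  assume "x k = 0"
  then have "(\<Sum>e\<in>#{#delta k#}. mon x I e) = (\<Sum>e\<in>#{#}. mon x I e)"
    using mono_delta[OF assms(2,3), of x] by simp
  moreover have "supp_in (delta k) I" using assms(3) unfolding supp_in_def delta_def by auto
  ultimately have "{#delta k#} = {#}" by (intro alg_indep_mset[OF assms(1)]) auto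
  then show False by simp
qed

lemma alg_indep_sum_nz:
  assumes "alg_indep x I" "supp_in p I" "supp_in q I"
  shows "mon x I p + mon x I q \<noteq> 0"
proof
  assume "mon x I p + mon x I q = 0"
  then have "(\<Sum>e\<in>#{#p,q#}. mon x I e) = (\<Sum>e\<in>#{#}. mon x I e)" by simp
  then have "{#p,q#} = {#}" by (intro alg_indep_mset[OF assms(1)]) (use assms(2,3) in auto)
  then show False by simp
qed

lemma alg_indep_pair:
  assumes "alg_indep x I" "supp_in p I" "supp_in q I" "supp_in p' I" "supp_in q' I"
    and "mon x I p + mon x I q = mon x I p' + mon x I q'"
  shows "(p = p' \<and> q = q') \<or> (p = q' \<and> q = p')"
proof -
  have "(\<Sum>e\<in>#{#p,q#}. mon x I e) = (\<Sum>e\<in>#{#p',q'#}. mon x I e)" using assms(6) by simp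
  then have "{#p,q#} = {#p',q'#}" by (intro alg_indep_mset[OF assms(1)]) (use assms(2-5) in auto)
  then show ?thesis by (auto simp: add_eq_conv_diff)
qed

lemma qalg_mono: "G \<subseteq> G' \<Longrightarrow> qalg G \<subseteq> qalg G'"
proof
  fix v assume "G \<subseteq> G'" "v \<in> qalg G"
  from this(2,1) show "v \<in> qalg G'" by (induction rule: qalg.induct) (auto intro: qalg.intros)
qed

lemma qalg_idem: "qalg (qalg G) = qalg G"
proof
  show "qalg (qalg G) \<subseteq> qalg G"
  proof
    fix v assume "v \<in> qalg (qalg G)"
    then show "v \<in> qalg G" by (induction rule: qalg.induct) (auto intro: qalg.intros)
  qed
  show "qalg G \<subseteq> qalg (qalg G)" by (auto intro: qalg.gen)
qed

lemma qalg_sub: "G \<subseteq> qalg G'' \<Longrightarrow> qalg G \<subseteq> qalg G''"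
  using qalg_mono[of G "qalg G''"] qalg_idem[of G''] by auto

lemma qalg_0: "0 \<in> qalg G" using qalg.rat[of 0 G] by simp
lemma qalg_1: "1 \<in> qalg G" using qalg.rat[of 1 G] by simp

lemma qalg_pow: "v \<in> qalg G \<Longrightarrow> v ^ n \<in> qalg G"
  by (induction n) (auto intro: qalg.intros qalg_1)

lemma qalg_prod: "(\<And>i. i \<in> F \<Longrightarrow> f i \<in> qalg G) \<Longrightarrow> prod f F \<in> qalg G"
  by (induction F rule: infinite_finite_induct) (auto intro: qalg.intros qalg_1)

lemma qalg_sum: "(\<And>i. i \<in> F \<Longrightarrow> f i \<in> qalg G) \<Longrightarrow> sum f F \<in> qalg G"
  by (induction F rule: infinite_finite_induct) (auto intro: qalg.intros qalg_0)

lemma qalg_neg: "v \<in> qalg G \<Longrightarrow> - v \<in> qalg G"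
  using qalg.mult[OF qalg.rat[of "-1"], of v G] by (simp add: of_rat_minus)

lemma qalg_diff: "v \<in> qalg G \<Longrightarrow> w \<in> qalg G \<Longrightarrow> v - w \<in> qalg G"
  unfolding diff_conv_add_uminus by (intro qalg.add qalg_neg)

definition rep :: "(nat \<Rightarrow> 'a::field_char_0) \<Rightarrow> nat set \<Rightarrow> nat set \<Rightarrow> 'a \<Rightarrow> bool" where
  "rep x I J v \<longleftrightarrow> (\<exists>M c. finite M \<and> (\<forall>e\<in>M. supp_in e J) \<and>
      v = (\<Sum>e\<in>M. of_rat (c e) * mon x I e))"

lemma mon_add: "mon x I (\<lambda>i. e i + f i) = mon x I e * mon x I f"
  unfolding mon_def by (simp add: power_add prod.distrib)

lemma regroup:
  assumes "finite P" "\<forall>p\<in>P. supp_in (m p) J"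
  shows "rep x I J (\<Sum>p\<in>P. of_rat (d p) * mon x I (m p))"
proof -
  define M where "M = m ` P"
  define c where "c e = (\<Sum>p\<in>{p\<in>P. m p = e}. d p)" for e
  have "(\<Sum>e\<in>M. of_rat (c e) * mon x I e)
      = (\<Sum>e\<in>M. \<Sum>p\<in>{p\<in>P. m p = e}. of_rat (d p) * mon x I (m p))"
    unfolding c_def of_rat_sum sum_distrib_right by (rule sum.cong) auto
  also have "\<dots> = (\<Sum>p\<in>P. of_rat (d p) * mon x I (m p))"
    by (rule sum.group) (use assms M_def in auto)
  finally show ?thesis unfolding rep_def using assms M_def
    by (intro exI[of _ M] exI[of _ c]) auto
qed

lemma qalg_rep:
  assumes "finite I" "J \<subseteq> I" "v \<in> qalg (x ` J)"
  shows "rep x I J v"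
  using assms(3)
proof (induction rule: qalg.induct)
  case (gen v)
  then obtain j where j: "j \<in> J" "v = x j" by auto
  have "supp_in (delta j) J" using j unfolding supp_in_def delta_def by auto
  then show ?case unfolding rep_def using j assms mono_delta[of I j x]
    by (intro exI[of _ "{delta j}"] exI[of _ "\<lambda>_. 1"]) auto
next
  case (rat q)
  have "mon x I (\<lambda>_. 0) = 1" unfolding mon_def by simp
  then show ?case unfolding rep_def
    by (intro exI[of _ "{\<lambda>_. 0}"] exI[of _ "\<lambda>_. q"]) (auto simp: supp_in_def)
next
  case (add v w)
  obtain M1 c1 where r1: "finite M1" "\<forall>e\<in>M1. supp_in e J"
     "v = (\<Sum>e\<in>M1. of_rat (c1 e) * mon x I e)" using add.IH(1) unfolding rep_def
    by (elim exE conjE) (rule that; assumption)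
  obtain M2 c2 where r2: "finite M2" "\<forall>e\<in>M2. supp_in e J"
     "w = (\<Sum>e\<in>M2. of_rat (c2 e) * mon x I e)" using add.IH(2) unfolding rep_def
    by (elim exE conjE) (rule that; assumption)
  note r = r1 r2
  have eq: "v + w = (\<Sum>p\<in>M1 <+> M2. of_rat (case_sum c1 c2 p) * mon x I (case_sum id id p))"
    using r by (simp add: sum.Plus comp_def)
  show ?case unfolding eq
    by (rule regroup) (use r(1,2,4,5) in \<open>auto elim!: PlusE\<close>)
next
  case (mult v w)
  obtain M1 c1 where r1: "finite M1" "\<forall>e\<in>M1. supp_in e J"
     "v = (\<Sum>e\<in>M1. of_rat (c1 e) * mon x I e)" using mult.IH(1) unfolding rep_def
    by (elim exE conjE) (rule that; assumption)
  obtain M2 c2 where r2: "finite M2" "\<forall>e\<in>M2. supp_in e J"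
     "w = (\<Sum>e\<in>M2. of_rat (c2 e) * mon x I e)" using mult.IH(2) unfolding rep_def
    by (elim exE conjE) (rule that; assumption)
  note r = r1 r2
  have "v * w = (\<Sum>e\<in>M1. \<Sum>f\<in>M2. of_rat (c1 e) * mon x I e * (of_rat (c2 f) * mon x I f))"
    using r by (simp add: sum_product)
  also have "\<dots> = (\<Sum>p\<in>M1 \<times> M2. of_rat (c1 (fst p) * c2 (snd p)) * mon x I (\<lambda>i. fst p i + snd p i))"
    by (simp add: sum.cartesian_product mon_add of_rat_mult split_def mult_ac)
  finally have eq: "v * w = \<dots>" .
  show ?case unfolding eq
    by (rule regroup) (use r(1,2,4,5) in \<open>auto simp: supp_in_def\<close>)
qed

lemma mon_upd:
  assumes "finite I" "k \<in> I" "e k = 0"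
  shows "mon x I (e(k := j)) = mon x I e * x k ^ j"
proof -
  have "mon x I (e(k := j)) = x k ^ j * (\<Prod>i\<in>I - {k}. x i ^ e i)"
    unfolding mon_def using assms by (simp add: prod.remove)
  moreover have "mon x I e = (\<Prod>i\<in>I - {k}. x i ^ e i)"
    unfolding mon_def using assms by (simp add: prod.remove)
  ultimately show ?thesis by simp
qed

lemma alg_indep_transc:
  assumes ai: "alg_indep x I" and fI: "finite I" and k: "k \<in> I" and fJ: "finite Js"
    and g: "\<forall>j\<in>Js. g j \<in> qalg (x ` (I - {k}))"
    and z: "(\<Sum>j\<in>Js. g j * x k ^ j) = 0"
  shows "\<forall>j\<in>Js. g j = 0"
proof -
  have "\<forall>j\<in>Js. \<exists>Mc. finite (fst Mc) \<and> (\<forall>e\<in>fst Mc. supp_in e (I - {k})) \<and>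
           g j = (\<Sum>e\<in>fst Mc. of_rat (snd Mc e) * mon x I e)"
  proof
    fix j assume "j \<in> Js"
    then have "rep x I (I - {k}) (g j)" using g by (intro qalg_rep[OF fI]) auto
    then obtain M c where "finite M" "\<forall>e\<in>M. supp_in e (I - {k})"
      "g j = (\<Sum>e\<in>M. of_rat (c e) * mon x I e)" unfolding rep_def by blast
    then show "\<exists>Mc. finite (fst Mc) \<and> (\<forall>e\<in>fst Mc. supp_in e (I - {k})) \<and>
           g j = (\<Sum>e\<in>fst Mc. of_rat (snd Mc e) * mon x I e)"
      by (intro exI[of _ "(M, c)"]) simp
  qed
  from bchoice[OF this] obtain Mc where Mc0: "\<forall>j\<in>Js. finite (fst (Mc j)) \<and> (\<forall>e\<in>fst (Mc j). supp_in e (I - {k})) \<and>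
           g j = (\<Sum>e\<in>fst (Mc j). of_rat (snd (Mc j) e) * mon x I e)"
    by (erule exE)
  have Mc: "\<And>j. j \<in> Js \<Longrightarrow> finite (fst (Mc j)) \<and> (\<forall>e\<in>fst (Mc j). supp_in e (I - {k})) \<and>
           g j = (\<Sum>e\<in>fst (Mc j). of_rat (snd (Mc j) e) * mon x I e)"
    using Mc0 by blast
  define Mf where "Mf j = fst (Mc j)" for j
  define cf where "cf j = snd (Mc j)" for j
  have Mf: "\<And>j. j \<in> Js \<Longrightarrow> finite (Mf j)" "\<And>j e. j \<in> Js \<Longrightarrow> e \<in> Mf j \<Longrightarrow> supp_in e (I - {k})"
    and gj: "\<And>j. j \<in> Js \<Longrightarrow> g j = (\<Sum>e\<in>Mf j. of_rat (cf j e) * mon x I e)"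
    using Mc unfolding Mf_def cf_def by auto
  have ek: "\<And>j e. j \<in> Js \<Longrightarrow> e \<in> Mf j \<Longrightarrow> e k = 0" using Mf(2) unfolding supp_in_def by auto
  define h where "h = (\<lambda>(j::nat, e::nat \<Rightarrow> nat). e(k := j))"
  define S where "S = Sigma Js Mf"
  have fS: "finite S" unfolding S_def using fJ Mf(1) by auto
  have inj: "inj_on h S"
  proof (rule inj_onI)
    fix p q assume "p \<in> S" "q \<in> S" "h p = h q"
    then show "p = q" unfolding S_def h_def using ek
      by (cases p; cases q) (auto simp: fun_eq_iff split: if_splits; metis)
  qed
  define C where "C E = cf (E k) (E(k := 0))" for E
  have hC: "C (h p) = cf (fst p) (snd p)" if "p \<in> S" for p
  proof -
    obtain a b where p: "p = (a, b)" by (cases p)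
    with that have "a \<in> Js" "b \<in> Mf a" unfolding S_def by auto
    then have "b k = 0" using ek by auto
    then show ?thesis unfolding p C_def h_def by (simp add: fun_upd_idem)
  qed
  have "0 = (\<Sum>j\<in>Js. \<Sum>e\<in>Mf j. of_rat (cf j e) * mon x I e * x k ^ j)"
    using z gj by (simp add: sum_distrib_right)
  also have "\<dots> = (\<Sum>(j, e)\<in>Sigma Js Mf. of_rat (cf j e) * mon x I e * x k ^ j)"
    by (rule sum.Sigma) (use fJ Mf(1) in auto)
  also have "\<dots> = (\<Sum>p\<in>S. of_rat (cf (fst p) (snd p)) * mon x I (h p))"
    unfolding S_def by (rule sum.cong) (auto simp: h_def mon_upd[OF fI k] ek)
  also have "\<dots> = (\<Sum>p\<in>S. of_rat (C (h p)) * mon x I (h p))"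
    using hC by (auto intro: sum.cong)
  also have "\<dots> = (\<Sum>E\<in>h ` S. of_rat (C E) * mon x I E)"
    using sum.reindex[OF inj, of "\<lambda>E. of_rat (C E) * mon x I E"] by (simp add: comp_def)
  finally have z2: "(\<Sum>E\<in>h ` S. of_rat (C E) * (\<Prod>i\<in>I. x i ^ E i)) = 0" unfolding mon_def by simp
  have "\<forall>E\<in>h ` S. \<forall>i. i \<notin> I \<longrightarrow> E i = 0"
    using Mf(2) k unfolding S_def h_def supp_in_def by auto
  then have "\<forall>E\<in>h ` S. C E = 0" using ai z2 fS unfolding alg_indep_def by blast
  then have "\<And>j e. j \<in> Js \<Longrightarrow> e \<in> Mf j \<Longrightarrow> cf j e = 0"
    using hC unfolding S_def by force
  then show ?thesis using gj by simp
qed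

lemma alg_indep_D:
  assumes "alg_indep x I" "finite M" "\<forall>e\<in>M. \<forall>i. i \<notin> I \<longrightarrow> e i = 0"
    "(\<Sum>e\<in>M. of_rat (c e) * (\<Prod>i\<in>I. x i ^ e i)) = 0" "e \<in> M"
  shows "c e = 0"
  using assms unfolding alg_indep_def by blast

lemma alg_indep_exchange:
  fixes x :: "nat \<Rightarrow> 'a::field_char_0"
  assumes ai: "alg_indep x I" and fI: "finite I" and k: "k \<in> I"
    and w: "w \<in> qalg (x ` (I - {k}))" and wnz: "w \<noteq> 0" and z: "z * x k = w"
  shows "alg_indep (x(k := z)) I"
  unfolding alg_indep_def
proof (intro allI impI)
  fix M :: "(nat \<Rightarrow> nat) set" and c :: "(nat \<Rightarrow> nat) \<Rightarrow> rat"
  assume fM: "finite M" and supp: "\<forall>e\<in>M. \<forall>i. i \<notin> I \<longrightarrow> e i = 0"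
    and s0: "(\<Sum>e\<in>M. of_rat (c e) * (\<Prod>i\<in>I. (x(k := z)) i ^ e i)) = 0"
  define y where "y = x(k := z)"
  define N where "N = Max (insert 0 ((\<lambda>e. e k) ` M))"
  have le: "e k \<le> N" if "e \<in> M" for e unfolding N_def using fM that by (intro Max_ge) auto
  have xk: "x k \<noteq> 0" using alg_indep_nz[OF ai fI k] .
  have mony: "(\<Prod>i\<in>I. y i ^ e i) = mon x I (e(k := 0)) * z ^ (e k)" for e
  proof -
    have "(\<Prod>i\<in>I. y i ^ e i) = mon y I ((e(k := 0))(k := e k))" unfolding mon_def by simp
    also have "\<dots> = mon y I (e(k := 0)) * y k ^ e k" by (rule mon_upd[OF fI k]) simp
    also have "mon y I (e(k := 0)) = mon x I (e(k := 0))"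
      unfolding mon_def y_def by (rule prod.cong) auto
    finally show ?thesis unfolding y_def by simp
  qed
  have pw: "z ^ a * x k ^ N = w ^ a * x k ^ (N - a)" if "a \<le> N" for a
  proof -
    have "x k ^ N = x k ^ a * x k ^ (N - a)" using that by (simp flip: power_add)
    then show ?thesis using z by (simp add: power_mult_distrib[symmetric] mult.assoc[symmetric])
  qed
  define T where "T e = of_rat (c e) * mon x I (e(k := 0)) * w ^ (e k) * x k ^ (N - e k)" for e
  have sT: "(\<Sum>e\<in>M. T e) = 0"
  proof -
    have "(\<Sum>e\<in>M. T e) = (\<Sum>e\<in>M. of_rat (c e) * (\<Prod>i\<in>I. y i ^ e i)) * x k ^ N"
      unfolding sum_distrib_right
    proof (rule sum.cong)
      fix e assume "e \<in> M"
      then show "T e = of_rat (c e) * (\<Prod>i\<in>I. y i ^ e i) * x k ^ N"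
        unfolding T_def mony using pw[OF le] by (simp add: mult.assoc)
    qed simp
    then show ?thesis using s0 unfolding y_def by simp
  qed
  define Js where "Js = (\<lambda>e. N - e k) ` M"
  define g where "g j = (\<Sum>e\<in>{e\<in>M. N - e k = j}. of_rat (c e) * mon x I (e(k := 0)) * w ^ (e k))" for j
  have gq: "\<forall>j\<in>Js. g j \<in> qalg (x ` (I - {k}))"
  proof
    fix j
    show "g j \<in> qalg (x ` (I - {k}))" unfolding g_def
    proof (intro qalg_sum qalg.mult qalg.rat qalg_pow[OF w])
      fix e
      show "mon x I (e(k := 0)) \<in> qalg (x ` (I - {k}))" unfolding mon_def
      proof (rule qalg_prod)
        fix i assume "i \<in> I"
        show "x i ^ (e(k := 0)) i \<in> qalg (x ` (I - {k}))"
        proof (cases "i = k")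
          case True then show ?thesis by (simp add: qalg_1)
        next
          case False then show ?thesis using \<open>i \<in> I\<close> by (intro qalg_pow qalg.gen) auto
        qed
      qed
    qed
  qed
  have "(\<Sum>j\<in>Js. g j * x k ^ j) = (\<Sum>j\<in>Js. \<Sum>e\<in>{e\<in>M. N - e k = j}. T e)"
    unfolding g_def sum_distrib_right T_def by (rule sum.cong) (auto intro!: sum.cong)
  also have "\<dots> = (\<Sum>e\<in>M. T e)"
    by (rule sum.group) (use fM Js_def in auto)
  finally have "(\<Sum>j\<in>Js. g j * x k ^ j) = 0" using sT by simp
  then have g0: "\<forall>j\<in>Js. g j = 0"
    by (intro alg_indep_transc[OF ai fI k _ gq]) (use fM Js_def in auto)
  show "\<forall>e\<in>M. c e = 0"
  proof
    fix e0 assume e0: "e0 \<in> M"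
    define a where "a = e0 k"
    define F where "F = {e\<in>M. N - e k = N - e0 k}"
    have Fa: "e k = a" if "e \<in> F" for e using that le[of e] le[OF e0] unfolding F_def a_def by auto
    have "g (N - e0 k) = w ^ a * (\<Sum>e\<in>F. of_rat (c e) * mon x I (e(k := 0)))"
      unfolding g_def F_def sum_distrib_left using Fa unfolding F_def
      by (intro sum.cong) (auto simp: mult_ac)
    moreover have "g (N - e0 k) = 0" using g0 e0 unfolding Js_def by auto
    ultimately have sF: "(\<Sum>e\<in>F. of_rat (c e) * mon x I (e(k := 0))) = 0" using wnz by simp
    have inj: "inj_on (\<lambda>e. e(k := 0)) F"
    proof (rule inj_onI)
      fix e e' assume "e \<in> F" "e' \<in> F" "e(k := 0) = e'(k := 0)"
      then show "e = e'" using Fa[of e] Fa[of e'] by (metis fun_upd_idem fun_upd_upd)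
    qed
    have s1: "(\<Sum>E\<in>(\<lambda>e. e(k := 0)) ` F. of_rat (c (E(k := a))) * (\<Prod>i\<in>I. x i ^ E i)) = 0"
      using sF unfolding sum.reindex[OF inj] mon_def using Fa by (simp add: comp_def)
    have s2: "finite ((\<lambda>e. e(k := 0)) ` F)" using fM unfolding F_def by auto
    have s3: "\<forall>E\<in>(\<lambda>e. e(k := 0)) ` F. \<forall>i. i \<notin> I \<longrightarrow> E i = 0"
    proof (intro ballI allI impI)
      fix E i assume "E \<in> (\<lambda>e. e(k := 0)) ` F" "i \<notin> I"
      then obtain e where "e \<in> M" "E = e(k := 0)" unfolding F_def by blast
      then show "E i = 0" using supp \<open>i \<notin> I\<close> by simp
    qed
    have "e0 \<in> F" using e0 unfolding F_def by auto
    then have "e0(k := 0) \<in> (\<lambda>e. e(k := 0)) ` F" by (rule imageI)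
    from alg_indep_D[of x I "(\<lambda>e. e(k := 0)) ` F" "\<lambda>E. c (E(k := a))", OF ai s2 s3 s1 this]
    have "c ((e0(k := 0))(k := a)) = 0" .
    then show "c e0 = 0" unfolding a_def by simp
  qed
qed

definition Pm :: "('a::field_char_0) seed \<Rightarrow> nat \<Rightarrow> 'a" where
  "Pm S k = (\<Prod>i\<in>{i\<in>ext S. mat S i k > 0}. cl S i ^ nat (mat S i k))"
definition Qm :: "('a::field_char_0) seed \<Rightarrow> nat \<Rightarrow> 'a" where
  "Qm S k = (\<Prod>i\<in>{i\<in>ext S. mat S i k < 0}. cl S i ^ nat (- mat S i k))"

definition Xm :: "int \<Rightarrow> int \<Rightarrow> int" where "Xm a b = \<bar>a\<bar> * b + a * \<bar>b\<bar>"

lemma cl_mutate: "cl (mutate k S) = (cl S)(k := (Pm S k + Qm S k) / cl S k)"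
  unfolding mutate_def Pm_def Qm_def by simp

lemma mat_mutate: "mat (mutate k S) i j =
   (if i = k \<or> j = k then - mat S i j else mat S i j + Xm (mat S i k) (mat S k j) div 2)"
  unfolding mutate_def Xm_def by simp

lemma ex_mutate[simp]: "ex (mutate k S) = ex S" and fr_mutate[simp]: "fr (mutate k S) = fr S"
  unfolding mutate_def by simp_all

lemma ext_mutate[simp]: "ext (mutate k S) = ext S" unfolding ext_def by simp

lemma mutseq_Nil[simp]: "mutseq [] S = S" unfolding mutseq_def by simp
lemma mutseq_Cons[simp]: "mutseq (k # ks) S = mutseq ks (mutate k S)" unfolding mutseq_def by simp
lemma mutseq_append: "mutseq (ks @ ls) S = mutseq ls (mutseq ks S)" unfolding mutseq_def by simp
lemma mutseq_single: "mutseq [k] S = mutate k S" by simp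

lemma ex_mutseq[simp]: "ex (mutseq ks S) = ex S" and fr_mutseq[simp]: "fr (mutseq ks S) = fr S"
  by (induction ks arbitrary: S) auto

lemma ext_mutseq[simp]: "ext (mutseq ks S) = ext S" unfolding ext_def by simp

lemma Xm_even: "even (Xm a b)"
  unfolding Xm_def by (cases "a \<ge> 0"; cases "b \<ge> 0") (auto simp: abs_if)

lemma Xm_neg: "Xm (- a) (- b) = - Xm a b" unfolding Xm_def by simp

lemma div2_neg: "even (X::int) \<Longrightarrow> (- X) div 2 = - (X div 2)" by (elim evenE) simp

lemma skew_diag: "skew_symmetrizable E B \<Longrightarrow> k \<in> E \<Longrightarrow> B k k = 0"
proof -
  assume "skew_symmetrizable E B" "k \<in> E"
  then obtain d where "d k > 0" "d k * B k k = - (d k * B k k)"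
    unfolding skew_symmetrizable_def by blast
  then show ?thesis by simp
qed

lemma skew_arith:
  fixes di dj dk bik bki bkj bjk :: int
  assumes p: "di > 0" "dj > 0" "dk > 0" and e1: "di * bik = - (dk * bki)" and e2: "dk * bkj = - (dj * bjk)"
  shows "di * Xm bik bkj = - (dj * Xm bjk bki)"
proof -
  have "\<bar>di * bik\<bar> = \<bar>dk * bki\<bar>" using e1 by simp
  then have a1: "di * \<bar>bik\<bar> = dk * \<bar>bki\<bar>" using p by (simp add: abs_mult)
  have "\<bar>dk * bkj\<bar> = \<bar>dj * bjk\<bar>" using e2 by simp
  then have a2: "dk * \<bar>bkj\<bar> = dj * \<bar>bjk\<bar>" using p by (simp add: abs_mult)
  have "di * Xm bik bkj = (di * \<bar>bik\<bar>) * bkj + (di * bik) * \<bar>bkj\<bar>"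
    unfolding Xm_def by (simp add: algebra_simps)
  also have "\<dots> = \<bar>bki\<bar> * (dk * bkj) - bki * (dk * \<bar>bkj\<bar>)"
    unfolding a1 e1 by (simp add: algebra_simps)
  also have "\<dots> = - (dj * Xm bjk bki)"
    unfolding a2 e2 Xm_def by (simp add: algebra_simps)
  finally show ?thesis .
qed

lemma skew_mutate:
  assumes sk: "skew_symmetrizable E (mat S)" and k: "k \<in> E"
  shows "skew_symmetrizable E (mat (mutate k S))"
proof -
  obtain d where dpos: "\<forall>i\<in>E. d i > 0" and ds: "\<forall>i\<in>E. \<forall>j\<in>E. d i * mat S i j = - (d j * mat S j i)"
    using sk unfolding skew_symmetrizable_def by (elim exE conjE)
  have "d i * mat (mutate k S) i j = - (d j * mat (mutate k S) j i)" if ij: "i \<in> E" "j \<in> E" for i j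
  proof (cases "i = k \<or> j = k")
    case True
    then have "mat (mutate k S) i j = - mat S i j" "mat (mutate k S) j i = - mat S j i"
      unfolding mat_mutate by auto
    moreover have "d i * mat S i j = - (d j * mat S j i)" using ds ij by blast
    ultimately show ?thesis by simp
  next
    case False
    have e1: "d i * mat S i k = - (d k * mat S k i)" using ds ij k by blast
    have e2: "d k * mat S k j = - (d j * mat S j k)" using ds ij k by blast
    have key: "d i * Xm (mat S i k) (mat S k j) = - (d j * Xm (mat S j k) (mat S k i))"
      by (rule skew_arith[OF _ _ _ e1 e2]) (use dpos ij k in auto)
    obtain m1 where m1: "Xm (mat S i k) (mat S k j) = 2 * m1" using Xm_even[of "mat S i k" "mat S k j"] by (blast elim: evenE)
    obtain m2 where m2: "Xm (mat S j k) (mat S k i) = 2 * m2" using Xm_even[of "mat S j k" "mat S k i"] by (blast elim: evenE)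
    have mm: "d i * m1 = - (d j * m2)" using key unfolding m1 m2 by (simp add: algebra_simps)
    have b: "d i * mat S i j = - (d j * mat S j i)" using ds ij by blast
    have "mat (mutate k S) i j = mat S i j + m1" using False unfolding mat_mutate m1 by simp
    moreover have "mat (mutate k S) j i = mat S j i + m2" using False unfolding mat_mutate m2 by simp
    ultimately show ?thesis using mm b by (simp add: algebra_simps)
  qed
  then show ?thesis unfolding skew_symmetrizable_def using dpos by blast
qed

lemma prod_sub_mon:
  assumes "finite I" "A \<subseteq> I"
  shows "(\<Prod>i\<in>A. x i ^ n i) = mon x I (\<lambda>i. if i \<in> A then n i else 0)"
proof -
  have "mon x I (\<lambda>i. if i \<in> A then n i else 0) = (\<Prod>i\<in>I. if i \<in> A then x i ^ n i else 1)"
    unfolding mon_def by (rule prod.cong) auto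
  also have "\<dots> = (\<Prod>i\<in>I \<inter> A. x i ^ n i)" using prod.inter_restrict[OF assms(1), of "\<lambda>i. x i ^ n i" A] by simp
  also have "I \<inter> A = A" using assms by auto
  finally show ?thesis by simp
qed

lemma Pm_mon: "finite (ext S) \<Longrightarrow> Pm S k = mon (cl S) (ext S)
   (\<lambda>i. if i \<in> {i\<in>ext S. mat S i k > 0} then nat (mat S i k) else 0)"
  unfolding Pm_def by (rule prod_sub_mon) auto

lemma Qm_mon: "finite (ext S) \<Longrightarrow> Qm S k = mon (cl S) (ext S)
   (\<lambda>i. if i \<in> {i\<in>ext S. mat S i k < 0} then nat (- mat S i k) else 0)"
  unfolding Qm_def by (rule prod_sub_mon) auto

lemma PQ_nz:
  assumes "valid_seed S"
  shows "Pm S k + Qm S k \<noteq> 0"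
proof -
  have f: "finite (ext S)" using assms unfolding valid_seed_def ext_def by auto
  have ai: "alg_indep (cl S) (ext S)" using assms unfolding valid_seed_def by auto
  show ?thesis unfolding Pm_mon[OF f] Qm_mon[OF f]
    by (rule alg_indep_sum_nz[OF ai]) (auto simp: supp_in_def)
qed

lemma valid_finite: "valid_seed S \<Longrightarrow> finite (ext S)"
  unfolding valid_seed_def ext_def by auto

lemma valid_ai: "valid_seed S \<Longrightarrow> alg_indep (cl S) (ext S)"
  unfolding valid_seed_def by auto

lemma valid_mutate:
  assumes v: "valid_seed S" and k: "k \<in> ex S"
  shows "valid_seed (mutate k S)"
proof -
  have f: "finite (ext S)" by (rule valid_finite[OF v])
  have ai: "alg_indep (cl S) (ext S)" by (rule valid_ai[OF v])
  have kI: "k \<in> ext S" using k unfolding ext_def by auto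
  have sk: "skew_symmetrizable (ex S) (mat S)" using v unfolding valid_seed_def by auto
  have kk: "mat S k k = 0" by (rule skew_diag[OF sk k])
  have xk: "cl S k \<noteq> 0" by (rule alg_indep_nz[OF ai f kI])
  have w: "Pm S k + Qm S k \<in> qalg (cl S ` (ext S - {k}))"
    unfolding Pm_def Qm_def
    by (intro qalg.add qalg_prod qalg_pow qalg.gen) (auto simp: kk)
  have "alg_indep ((cl S)(k := (Pm S k + Qm S k) / cl S k)) (ext S)"
    by (rule alg_indep_exchange[OF ai f kI w PQ_nz[OF v]]) (use xk in simp)
  then show ?thesis using v skew_mutate[OF sk k] unfolding valid_seed_def cl_mutate by simp
qed

lemma valid_mutseq: "valid_seed S \<Longrightarrow> set ks \<subseteq> ex S \<Longrightarrow> valid_seed (mutseq ks S)"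
  by (induction ks arbitrary: S) (auto simp: valid_mutate)

lemma mutate_invol:
  assumes v: "valid_seed S" and k: "k \<in> ex S"
  shows "mutate k (mutate k S) = S"
proof -
  let ?S' = "mutate k S"
  have sk: "skew_symmetrizable (ex S) (mat S)" using v unfolding valid_seed_def by auto
  have kk: "mat S k k = 0" by (rule skew_diag[OF sk k])
  have m1: "mat ?S' i k = - mat S i k" for i unfolding mat_mutate by simp
  have P': "Pm ?S' k = Qm S k"
    unfolding Pm_def Qm_def m1 ext_mutate
    by (rule prod.cong) (auto simp: cl_mutate kk)
  have Q': "Qm ?S' k = Pm S k"
    unfolding Pm_def Qm_def m1 ext_mutate
    by (rule prod.cong) (auto simp: cl_mutate kk)
  have nz: "Pm S k + Qm S k \<noteq> 0" by (rule PQ_nz[OF v])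
  have clk: "(Qm S k + Pm S k) / ((Pm S k + Qm S k) / cl S k) = cl S k"
    using nz by (cases "cl S k = 0") (auto simp: add.commute)
  have cl2: "cl (mutate k ?S') = cl S"
    unfolding cl_mutate[of k ?S'] P' Q' unfolding cl_mutate[of k S] by (simp only: fun_upd_same fun_upd_upd clk fun_upd_triv)
  have mat2: "mat (mutate k ?S') = mat S"
  proof (intro ext)
    fix i j
    show "mat (mutate k ?S') i j = mat S i j"
    proof (cases "i = k \<or> j = k")
      case True then show ?thesis unfolding mat_mutate[of k ?S'] by (simp add: mat_mutate)
    next
      case False
      have "mat (mutate k ?S') i j = mat ?S' i j + Xm (mat ?S' i k) (mat ?S' k j) div 2"
        using False unfolding mat_mutate[of k ?S'] by simp
      also have "Xm (mat ?S' i k) (mat ?S' k j) = - Xm (mat S i k) (mat S k j)"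
        unfolding mat_mutate by (simp add: Xm_neg[symmetric])
      finally show ?thesis using False unfolding mat_mutate[of k S]
        by (simp add: div2_neg[OF Xm_even])
    qed
  qed
  show ?thesis by (rule seed.equality) (simp only: cl2, simp, simp, simp only: mat2, simp add: mutate_def)
qed

lemma mutseq_rev:
  "valid_seed S \<Longrightarrow> set ks \<subseteq> ex S \<Longrightarrow> mutseq (rev ks) (mutseq ks S) = S"
proof (induction ks arbitrary: S)
  case Nil then show ?case by simp
next
  case (Cons k ks)
  have v': "valid_seed (mutate k S)" using valid_mutate Cons.prems by auto
  have "mutseq (rev (k # ks)) (mutseq (k # ks) S) = mutate k (mutseq (rev ks) (mutseq ks (mutate k S)))"
    by (simp add: mutseq_append)
  also have "\<dots> = mutate k (mutate k S)" using Cons.IH[OF v'] Cons.prems by simp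
  also have "\<dots> = S" using mutate_invol Cons.prems by auto
  finally show ?case .
qed

lemma mclass_self: "S \<in> mclass S" unfolding mclass_def by (auto intro: exI[of _ "[]"])

lemma mclass_ex: "T \<in> mclass S \<Longrightarrow> ex T = ex S \<and> fr T = fr S \<and> ext T = ext S"
  unfolding mclass_def by auto

lemma mclass_valid: "valid_seed S \<Longrightarrow> T \<in> mclass S \<Longrightarrow> valid_seed T"
  unfolding mclass_def by (auto intro: valid_mutseq)

lemma mclass_mutseq: "T \<in> mclass S \<Longrightarrow> set ks \<subseteq> ex S \<Longrightarrow> mutseq ks T \<in> mclass S"
proof -
  assume T: "T \<in> mclass S" and ks: "set ks \<subseteq> ex S"
  then obtain t where t: "T = mutseq t S" "set t \<subseteq> ex S" unfolding mclass_def by auto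
  then have "mutseq ks T = mutseq (t @ ks) S" by (simp add: mutseq_append)
  then show ?thesis unfolding mclass_def using t ks by (intro CollectI exI[of _ "t @ ks"]) auto
qed

lemma mclass_reach:
  assumes v: "valid_seed S" and T: "T \<in> mclass S" and U: "U \<in> mclass S"
  shows "\<exists>m. set m \<subseteq> ex S \<and> U = mutseq m T"
proof -
  obtain t where t: "T = mutseq t S" "set t \<subseteq> ex S" using T unfolding mclass_def by auto
  obtain u where u: "U = mutseq u S" "set u \<subseteq> ex S" using U unfolding mclass_def by auto
  have "mutseq (rev t @ u) T = U" using t u mutseq_rev[OF v t(2)] by (simp add: mutseq_append)
  then show ?thesis using t u by (intro exI[of _ "rev t @ u"]) auto
qed

lemma mclass_eq:
  assumes v: "valid_seed S" and T: "T \<in> mclass S"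
  shows "mclass T = mclass S"
proof
  show "mclass T \<subseteq> mclass S"
  proof
    fix U assume "U \<in> mclass T"
    then obtain ks where "U = mutseq ks T" "set ks \<subseteq> ex T" unfolding mclass_def by auto
    then show "U \<in> mclass S" using mclass_mutseq[OF T] mclass_ex[OF T] by auto
  qed
  show "mclass S \<subseteq> mclass T"
  proof
    fix U assume "U \<in> mclass S"
    then obtain m where "set m \<subseteq> ex S" "U = mutseq m T" using mclass_reach[OF v T] by blast
    then show "U \<in> mclass T" using mclass_ex[OF T] unfolding mclass_def by auto
  qed
qed

definition compat :: "('a::field_char_0 \<Rightarrow> 'a) \<Rightarrow> 'a seed \<Rightarrow> 'a seed \<Rightarrow> (nat \<Rightarrow> nat) \<Rightarrow> bool" where
  "compat f T T' \<sigma> \<longleftrightarrow> bij_betw \<sigma> (ext T) (ext T') \<and> \<sigma> ` ex T = ex T' \<and>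
        (\<forall>ks. set ks \<subseteq> ex T \<longrightarrow>
           (\<forall>i\<in>ext T. f (cl (mutseq ks T) i) = cl (mutseq (map \<sigma> ks) T') (\<sigma> i)))"

definition ishom :: "('a::field_char_0 \<Rightarrow> 'a) \<Rightarrow> 'a set \<Rightarrow> bool" where
  "ishom f A \<longleftrightarrow> (\<forall>x\<in>A. \<forall>y\<in>A. f (x + y) = f x + f y \<and> f (x * y) = f x * f y) \<and> f 1 = 1"

lemma cluster_iso_alt: "cluster_iso S1 S2 f \<longleftrightarrow>
   bij_betw f (cluster_alg S1) (cluster_alg S2) \<and> ishom f (cluster_alg S1) \<and>
   (\<exists>T\<in>mclass S1. \<exists>T'\<in>mclass S2. \<exists>\<sigma>. compat f T T' \<sigma>)"
  unfolding cluster_iso_def compat_def ishom_def by blast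

lemma compat_shift:
  assumes c: "compat f T T' \<sigma>" and m: "set m \<subseteq> ex T"
  shows "compat f (mutseq m T) (mutseq (map \<sigma> m) T') \<sigma>"
  unfolding compat_def
proof (intro conjI allI impI ballI)
  show "bij_betw \<sigma> (ext (mutseq m T)) (ext (mutseq (map \<sigma> m) T'))" using c unfolding compat_def by simp
  show "\<sigma> ` ex (mutseq m T) = ex (mutseq (map \<sigma> m) T')" using c unfolding compat_def by simp
  fix ks i assume ks: "set ks \<subseteq> ex (mutseq m T)" and i: "i \<in> ext (mutseq m T)"
  have "f (cl (mutseq ks (mutseq m T)) i) = f (cl (mutseq (m @ ks) T) i)" by (simp add: mutseq_append)
  also have "\<dots> = cl (mutseq (map \<sigma> (m @ ks)) T') (\<sigma> i)"
    using c ks m i unfolding compat_def by simp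
  finally show "f (cl (mutseq ks (mutseq m T)) i) = cl (mutseq (map \<sigma> ks) (mutseq (map \<sigma> m) T')) (\<sigma> i)"
    by (simp add: mutseq_append)
qed

lemma clvar_in: "T \<in> mclass S0 \<Longrightarrow> i \<in> ext T \<Longrightarrow> cl T i \<in> cluster_alg S0"
  unfolding cluster_alg_def cvars_def by (auto intro: qalg.gen)

lemma Aut_D:
  assumes "f \<in> Aut S0"
  shows "bij_betw f (cluster_alg S0) (cluster_alg S0)" "ishom f (cluster_alg S0)"
    "\<And>x. x \<notin> cluster_alg S0 \<Longrightarrow> f x = x"
    "\<exists>T\<in>mclass S0. \<exists>T'\<in>mclass S0. \<exists>\<sigma>. compat f T T' \<sigma>"
  using assms unfolding Aut_def cluster_iso_alt by auto

lemma Aut_I: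
  assumes "bij_betw f (cluster_alg S0) (cluster_alg S0)" "ishom f (cluster_alg S0)"
    "\<And>x. x \<notin> cluster_alg S0 \<Longrightarrow> f x = x"
    "T \<in> mclass S0" "T' \<in> mclass S0" "compat f T T' \<sigma>"
  shows "f \<in> Aut S0"
  using assms unfolding Aut_def cluster_iso_alt by blast

lemma compat_any:
  assumes v: "valid_seed S0" and f: "f \<in> Aut S0" and U: "U \<in> mclass S0"
  shows "\<exists>U'\<in>mclass S0. \<exists>\<sigma>. compat f U U' \<sigma>"
proof -
  obtain T T' \<sigma> where T: "T \<in> mclass S0" and T': "T' \<in> mclass S0" and c: "compat f T T' \<sigma>"
    using Aut_D(4)[OF f] by blast
  obtain m where m: "set m \<subseteq> ex S0" "U = mutseq m T" using mclass_reach[OF v T U] by blast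
  have mT: "set m \<subseteq> ex T" using m mclass_ex[OF T] by simp
  have se: "\<sigma> ` ex T = ex T'" using c unfolding compat_def by auto
  have "set (map \<sigma> m) \<subseteq> ex S0" using se mT mclass_ex[OF T'] by auto
  then have "mutseq (map \<sigma> m) T' \<in> mclass S0" using mclass_mutseq[OF T'] by blast
  then show ?thesis using compat_shift[OF c mT] m by blast
qed

lemma ishom_1: "ishom f A \<Longrightarrow> f 1 = 1" unfolding ishom_def by simp
lemma ishom_add: "ishom f A \<Longrightarrow> x \<in> A \<Longrightarrow> y \<in> A \<Longrightarrow> f (x + y) = f x + f y" unfolding ishom_def by simp
lemma ishom_mult: "ishom f A \<Longrightarrow> x \<in> A \<Longrightarrow> y \<in> A \<Longrightarrow> f (x * y) = f x * f y" unfolding ishom_def by simp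

lemma cluster_alg_closed:
  shows "x \<in> cluster_alg S \<Longrightarrow> y \<in> cluster_alg S \<Longrightarrow> x + y \<in> cluster_alg S"
    and "x \<in> cluster_alg S \<Longrightarrow> y \<in> cluster_alg S \<Longrightarrow> x * y \<in> cluster_alg S"
    and "of_rat q \<in> cluster_alg S" and "1 \<in> cluster_alg S"
  unfolding cluster_alg_def by (auto intro: qalg.intros qalg_1)

lemma Aut_comp:
  assumes v: "valid_seed S0" and f: "f \<in> Aut S0" and g: "g \<in> Aut S0"
  shows "g \<circ> f \<in> Aut S0"
proof -
  let ?A = "cluster_alg S0"
  obtain T T' \<sigma> where T: "T \<in> mclass S0" and T': "T' \<in> mclass S0" and c: "compat f T T' \<sigma>"
    using Aut_D(4)[OF f] by blast
  obtain T'' \<tau> where T'': "T'' \<in> mclass S0" and c2: "compat g T' T'' \<tau>"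
    using compat_any[OF v g T'] by blast
  have fb: "bij_betw f ?A ?A" and gb: "bij_betw g ?A ?A" using Aut_D f g by auto
  have fh: "ishom f ?A" and gh: "ishom g ?A" using Aut_D f g by auto
  have fA: "x \<in> ?A \<Longrightarrow> f x \<in> ?A" for x using fb bij_betwE by blast
  have "compat (g \<circ> f) T T'' (\<tau> \<circ> \<sigma>)" unfolding compat_def
  proof (intro conjI allI impI ballI)
    show "bij_betw (\<tau> \<circ> \<sigma>) (ext T) (ext T'')"
      using c c2 unfolding compat_def by (auto intro: bij_betw_trans)
    have "\<sigma> ` ex T = ex T'" "\<tau> ` ex T' = ex T''" using c c2 unfolding compat_def by auto
    then show "(\<tau> \<circ> \<sigma>) ` ex T = ex T''" using image_comp[of \<tau> \<sigma> "ex T"] by simp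
    fix ks i assume ks: "set ks \<subseteq> ex T" and i: "i \<in> ext T"
    have ks': "set (map \<sigma> ks) \<subseteq> ex T'" using c ks unfolding compat_def by auto
    have i': "\<sigma> i \<in> ext T'" using c i unfolding compat_def by (auto dest: bij_betwE)
    show "(g \<circ> f) (cl (mutseq ks T) i) = cl (mutseq (map (\<tau> \<circ> \<sigma>) ks) T'') ((\<tau> \<circ> \<sigma>) i)"
      using c c2 ks i ks' i' unfolding compat_def by simp
  qed
  moreover have "bij_betw (g \<circ> f) ?A ?A" using fb gb by (rule bij_betw_trans)
  moreover have "ishom (g \<circ> f) ?A" unfolding ishom_def
    using fh gh fA cluster_alg_closed by (simp add: ishom_add ishom_mult ishom_1)
  moreover have "x \<notin> ?A \<Longrightarrow> (g \<circ> f) x = x" for x using Aut_D(3)[OF f, of x] Aut_D(3)[OF g, of x] by simp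
  ultimately show ?thesis using T T'' by (intro Aut_I) auto
qed

lemma aut_inv_f:
  assumes f: "f \<in> Aut S0"
  shows "aut_inv S0 f (f x) = x" and "f (aut_inv S0 f x) = x"
proof -
  let ?A = "cluster_alg S0"
  have fb: "bij_betw f ?A ?A" using Aut_D f by auto
  show "aut_inv S0 f (f x) = x"
  proof (cases "x \<in> ?A")
    case True
    then have "f x \<in> ?A" using fb bij_betwE by blast
    then show ?thesis unfolding aut_inv_def using True fb
      by (simp add: bij_betw_def inv_into_f_f)
  next
    case False
    then show ?thesis using Aut_D(3)[OF f] unfolding aut_inv_def by simp
  qed
  show "f (aut_inv S0 f x) = x"
  proof (cases "x \<in> ?A")
    case True
    then show ?thesis unfolding aut_inv_def using fb
      by (simp add: bij_betw_def f_inv_into_f)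
  next
    case False
    then show ?thesis using Aut_D(3)[OF f] unfolding aut_inv_def by simp
  qed
qed

lemma aut_inv_A: "f \<in> Aut S0 \<Longrightarrow> x \<in> cluster_alg S0 \<Longrightarrow> aut_inv S0 f x \<in> cluster_alg S0"
proof -
  assume f: "f \<in> Aut S0" and x: "x \<in> cluster_alg S0"
  have "f ` cluster_alg S0 = cluster_alg S0" using Aut_D(1)[OF f] by (simp add: bij_betw_def)
  then have "x \<in> f ` cluster_alg S0" using x by simp
  then show ?thesis unfolding aut_inv_def using x by (simp add: inv_into_into)
qed

lemma Aut_inv:
  assumes v: "valid_seed S0" and f: "f \<in> Aut S0"
  shows "aut_inv S0 f \<in> Aut S0"
proof -
  let ?A = "cluster_alg S0"
  let ?h = "aut_inv S0 f"
  obtain T T' \<sigma> where T: "T \<in> mclass S0" and T': "T' \<in> mclass S0" and c: "compat f T T' \<sigma>"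
    using Aut_D(4)[OF f] by blast
  have fb: "bij_betw f ?A ?A" using Aut_D f by auto
  have fh: "ishom f ?A" using Aut_D f by auto
  have hA: "x \<in> ?A \<Longrightarrow> ?h x \<in> ?A" for x using aut_inv_A[OF f] .
  have hb: "bij_betw ?h ?A ?A"
  proof -
    have "bij_betw (inv_into ?A f) ?A ?A" using bij_betw_inv_into[OF fb] .
    then show ?thesis by (rule bij_betw_cong[THEN iffD1, rotated]) (simp add: aut_inv_def)
  qed
  have hh: "ishom ?h ?A" unfolding ishom_def
  proof (intro conjI ballI)
    fix x y assume x: "x \<in> ?A" and y: "y \<in> ?A"
    have "?h (x + y) = ?h (f (?h x) + f (?h y))" using aut_inv_f(2)[OF f] by simp
    also have "\<dots> = ?h x + ?h y" using fh hA x y aut_inv_f(1)[OF f] by (simp add: ishom_add[symmetric])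
    finally show "?h (x + y) = ?h x + ?h y" .
    have "?h (x * y) = ?h (f (?h x) * f (?h y))" using aut_inv_f(2)[OF f] by simp
    also have "\<dots> = ?h x * ?h y" using fh hA x y aut_inv_f(1)[OF f] by (simp add: ishom_mult[symmetric])
    finally show "?h (x * y) = ?h x * ?h y" .
  next
    show "?h 1 = 1" using aut_inv_f(1)[OF f, of 1] ishom_1[OF fh] by simp
  qed
  define \<sigma>' where "\<sigma>' = inv_into (ext T) \<sigma>"
  have sb: "bij_betw \<sigma> (ext T) (ext T')" and se: "\<sigma> ` ex T = ex T'" using c unfolding compat_def by auto
  have exT: "ex T \<subseteq> ext T" unfolding ext_def by auto
  have exT': "ex T' \<subseteq> ext T'" unfolding ext_def by auto
  have ss: "\<sigma> (\<sigma>' j) = j" if "j \<in> ext T'" for j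
    unfolding \<sigma>'_def using sb that by (simp add: bij_betw_def f_inv_into_f)
  have s'i: "\<sigma>' (\<sigma> i) = i" if "i \<in> ext T" for i
    unfolding \<sigma>'_def using sb that by (simp add: bij_betw_def inv_into_f_f)
  have s'b: "bij_betw \<sigma>' (ext T') (ext T)" unfolding \<sigma>'_def by (rule bij_betw_inv_into[OF sb])
  have s'e: "\<sigma>' ` ex T' = ex T"
  proof -
    have "\<sigma>' ` ex T' = \<sigma>' ` \<sigma> ` ex T" using se by simp
    also have "\<dots> = ex T" using s'i exT by (force simp: image_comp)
    finally show ?thesis .
  qed
  have "compat ?h T' T \<sigma>'" unfolding compat_def
  proof (intro conjI allI impI ballI s'b s'e)
    fix ks' i' assume ks': "set ks' \<subseteq> ex T'" and i': "i' \<in> ext T'"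
    define ks where "ks = map \<sigma>' ks'"
    have ks: "set ks \<subseteq> ex T" using ks' s'e unfolding ks_def by auto
    have mks: "map \<sigma> ks = ks'" unfolding ks_def using ks' exT' ss by (induction ks') auto
    have i: "\<sigma>' i' \<in> ext T" using s'b i' by (auto dest: bij_betwE)
    have "f (cl (mutseq ks T) (\<sigma>' i')) = cl (mutseq ks' T') i'"
      using c ks i ss[OF i'] mks unfolding compat_def by metis
    then have "?h (cl (mutseq ks' T') i') = cl (mutseq ks T) (\<sigma>' i')"
      using aut_inv_f(1)[OF f] by metis
    then show "?h (cl (mutseq ks' T') i') = cl (mutseq (map \<sigma>' ks') T) (\<sigma>' i')"
      unfolding ks_def .
  qed
  moreover have "x \<notin> ?A \<Longrightarrow> ?h x = x" for x unfolding aut_inv_def by simp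
  ultimately show ?thesis using hb hh T T' by (intro Aut_I) auto
qed

lemma aut_inv_comp: "f \<in> Aut S0 \<Longrightarrow> aut_inv S0 f \<circ> f = id" "f \<in> Aut S0 \<Longrightarrow> f \<circ> aut_inv S0 f = id"
  using aut_inv_f by (auto simp: fun_eq_iff)

lemma aut_inv_inv:
  assumes v: "valid_seed S0" and f: "f \<in> Aut S0"
  shows "aut_inv S0 (aut_inv S0 f) = f"
proof -
  have fi: "aut_inv S0 f \<in> Aut S0" by (rule Aut_inv[OF v f])
  have "aut_inv S0 (aut_inv S0 f) = aut_inv S0 (aut_inv S0 f) \<circ> (aut_inv S0 f \<circ> f)"
    using aut_inv_comp(1)[OF f] by simp
  also have "\<dots> = (aut_inv S0 (aut_inv S0 f) \<circ> aut_inv S0 f) \<circ> f" by (simp add: comp_assoc)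
  also have "aut_inv S0 (aut_inv S0 f) \<circ> aut_inv S0 f = id"
    using aut_inv_comp(1)[OF fi] .
  finally show ?thesis by simp
qed

definition cj :: "('a::field_char_0) seed \<Rightarrow> ('a \<Rightarrow> 'a) \<Rightarrow> ('a \<Rightarrow> 'a) \<Rightarrow> ('a \<Rightarrow> 'a)" where
  "cj S0 g h = g \<circ> h \<circ> aut_inv S0 g"

lemma cj_Aut: "valid_seed S0 \<Longrightarrow> g \<in> Aut S0 \<Longrightarrow> h \<in> Aut S0 \<Longrightarrow> cj S0 g h \<in> Aut S0"
  unfolding cj_def by (intro Aut_comp Aut_inv) auto

lemma cj_app: assumes "g \<in> Aut S0" shows "cj S0 g h (g x) = g (h x)"
  unfolding cj_def using aut_inv_f(1)[OF assms] by simp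

lemma cj_inv:
  assumes v: "valid_seed S0" and g: "g \<in> Aut S0"
  shows "cj S0 (aut_inv S0 g) (cj S0 g h) = h"
proof -
  have "cj S0 (aut_inv S0 g) (cj S0 g h) = (aut_inv S0 g \<circ> g) \<circ> h \<circ> (aut_inv S0 g \<circ> g)"
    unfolding cj_def aut_inv_inv[OF v g] by (simp add: comp_assoc)
  then show ?thesis using aut_inv_comp(1)[OF g] by simp
qed

lemma Gal_img:
  assumes v: "valid_seed S0" and g: "g \<in> Aut S0"
  shows "Gal S0 (g ` B) = cj S0 g ` Gal S0 B"
proof
  have gi: "aut_inv S0 g \<in> Aut S0" by (rule Aut_inv[OF v g])
  show "cj S0 g ` Gal S0 B \<subseteq> Gal S0 (g ` B)"
    unfolding Gal_def using cj_Aut[OF v g] cj_app[OF g] by auto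
  show "Gal S0 (g ` B) \<subseteq> cj S0 g ` Gal S0 B"
  proof
    fix h2 assume h2: "h2 \<in> Gal S0 (g ` B)"
    define h where "h = cj S0 (aut_inv S0 g) h2"
    have hA: "h \<in> Aut S0" unfolding h_def using h2 gi unfolding Gal_def by (auto intro: cj_Aut[OF v])
    have "h b = b" if "b \<in> B" for b
    proof -
      have "h b = aut_inv S0 g (h2 (g b))" unfolding h_def cj_def aut_inv_inv[OF v g] by simp
      also have "h2 (g b) = g b" using h2 that unfolding Gal_def by auto
      finally show ?thesis using aut_inv_f(1)[OF g] by simp
    qed
    then have "h \<in> Gal S0 B" using hA unfolding Gal_def by auto
    moreover have "cj S0 g h = h2"
      using cj_inv[OF v gi, of h2] unfolding h_def aut_inv_inv[OF v g] .
    ultimately show "h2 \<in> cj S0 g ` Gal S0 B" by blast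
  qed
qed

lemma fixalg_img:
  assumes v: "valid_seed S0" and g: "g \<in> Aut S0"
  shows "fixalg S0 (cj S0 g ` H) = g ` fixalg S0 H"
proof
  let ?A = "cluster_alg S0"
  have gb: "bij_betw g ?A ?A" using Aut_D g by auto
  show "g ` fixalg S0 H \<subseteq> fixalg S0 (cj S0 g ` H)"
    unfolding fixalg_def using cj_app[OF g] gb by (auto dest: bij_betwE)
  show "fixalg S0 (cj S0 g ` H) \<subseteq> g ` fixalg S0 H"
  proof
    fix z assume z: "z \<in> fixalg S0 (cj S0 g ` H)"
    define w where "w = aut_inv S0 g z"
    have zw: "z = g w" unfolding w_def using aut_inv_f(2)[OF g] by simp
    have wA: "w \<in> ?A" using z unfolding w_def fixalg_def by (auto intro: aut_inv_A[OF g])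
    have "h w = w" if "h \<in> H" for h
    proof -
      have "g (h w) = g w" using z that cj_app[OF g, of h w] unfolding fixalg_def zw by auto
      then have "aut_inv S0 g (g (h w)) = aut_inv S0 g (g w)" by simp
      then show ?thesis using aut_inv_f(1)[OF g] by simp
    qed
    then have "w \<in> fixalg S0 H" using wA unfolding fixalg_def by auto
    then show "z \<in> g ` fixalg S0 H" using zw by auto
  qed
qed

lemma ishom_pow:
  assumes h: "ishom g (cluster_alg S0)" and a: "a \<in> cluster_alg S0"
  shows "g (a ^ n) = g a ^ n"
proof (induction n)
  case 0 then show ?case using ishom_1[OF h] by simp
next
  case (Suc n)
  have "a ^ n \<in> cluster_alg S0" using a unfolding cluster_alg_def by (rule qalg_pow)
  then show ?case using Suc ishom_mult[OF h a] by simp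
qed

lemma ishom_prodpow:
  assumes h: "ishom g (cluster_alg S0)" and a: "\<And>i. i \<in> F \<Longrightarrow> a i \<in> cluster_alg S0"
  shows "g (\<Prod>i\<in>F. a i ^ n i) = (\<Prod>i\<in>F. g (a i) ^ n i)"
  using a
proof (induction F rule: infinite_finite_induct)
  case (infinite F) then show ?case using ishom_1[OF h] by simp
next
  case empty then show ?case using ishom_1[OF h] by simp
next
  case (insert j F)
  have "(\<Prod>i\<in>F. a i ^ n i) \<in> cluster_alg S0" unfolding cluster_alg_def
    by (intro qalg_prod qalg_pow) (use insert.prems in \<open>auto simp: cluster_alg_def\<close>)
  moreover have "a j ^ n j \<in> cluster_alg S0" unfolding cluster_alg_def
    by (intro qalg_pow) (use insert.prems in \<open>auto simp: cluster_alg_def\<close>)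
  ultimately show ?case using insert ishom_mult[OF h] ishom_pow[OF h] by simp
qed

lemma mat_transport:
  assumes v: "valid_seed S0" and g: "g \<in> Aut S0" and S: "S \<in> mclass S0" and S': "S' \<in> mclass S0"
    and c: "compat g S S' \<sigma>" and a: "a \<in> ext S" and b: "b \<in> ex S" and z: "mat S a b = 0"
  shows "mat S' (\<sigma> a) (\<sigma> b) = 0"
proof -
  let ?A = "cluster_alg S0"
  let ?x = "cl S" and ?x' = "cl S'"
  have vS: "valid_seed S" and vS': "valid_seed S'" using mclass_valid[OF v] S S' by auto
  have hg: "ishom g ?A" using Aut_D(2)[OF g] .
  have sb: "bij_betw \<sigma> (ext S) (ext S')" and se: "\<sigma> ` ex S = ex S'" using c unfolding compat_def by auto
  have inj: "inj_on \<sigma> (ext S)" using sb by (simp add: bij_betw_def)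
  have bI: "b \<in> ext S" using b unfolding ext_def by auto
  have sbI: "\<sigma> b \<in> ext S'" using sb bI by (auto dest: bij_betwE)
  have sbe: "\<sigma> b \<in> ex S'" using se b by auto
  have saI: "\<sigma> a \<in> ext S'" using sb a by (auto dest: bij_betwE)
  have call: "\<And>ks i. set ks \<subseteq> ex S \<Longrightarrow> i \<in> ext S \<Longrightarrow>
      g (cl (mutseq ks S) i) = cl (mutseq (map \<sigma> ks) S') (\<sigma> i)"
    using c unfolding compat_def by blast
  have g0: "g (?x i) = ?x' (\<sigma> i)" if "i \<in> ext S" for i
    using call[of "[]" i] that by simp
  have g1: "g (cl (mutate b S) b) = cl (mutate (\<sigma> b) S') (\<sigma> b)"
    using call[of "[b]" b] b bI by simp
  have xA: "?x i \<in> ?A" if "i \<in> ext S" for i using clvar_in[OF S that] .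
  have fS: "finite (ext S)" and fS': "finite (ext S')" using vS vS' by (auto intro: valid_finite)
  have xb: "?x b \<noteq> 0" using alg_indep_nz[OF valid_ai[OF vS] fS bI] .
  have xb': "?x' (\<sigma> b) \<noteq> 0" using alg_indep_nz[OF valid_ai[OF vS'] fS' sbI] .
  define zz where "zz = cl (mutate b S) b"
  have zzA: "zz \<in> ?A" unfolding zz_def
    using clvar_in[of "mutate b S" S0 b] mclass_mutseq[OF S, of "[b]"] b mclass_ex[OF S] bI by auto
  have zzx: "zz * ?x b = Pm S b + Qm S b" unfolding zz_def cl_mutate using xb by simp
  have zz': "cl (mutate (\<sigma> b) S') (\<sigma> b) * ?x' (\<sigma> b) = Pm S' (\<sigma> b) + Qm S' (\<sigma> b)"
    unfolding cl_mutate using xb' by simp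
  define Ps where "Ps = {i\<in>ext S. mat S i b > 0}"
  define Qs where "Qs = {i\<in>ext S. mat S i b < 0}"
  have PA: "Pm S b \<in> ?A" and QA: "Qm S b \<in> ?A" unfolding Pm_def Qm_def cluster_alg_def
    by (intro qalg_prod qalg_pow; use xA in \<open>auto simp: cluster_alg_def\<close>)+
  have "g (Pm S b + Qm S b) = g zz * g (?x b)" using zzx ishom_mult[OF hg zzA xA[OF bI]] by simp
  also have "\<dots> = Pm S' (\<sigma> b) + Qm S' (\<sigma> b)" using g1 g0[OF bI] zz' unfolding zz_def by simp
  finally have e: "g (Pm S b) + g (Qm S b) = Pm S' (\<sigma> b) + Qm S' (\<sigma> b)"
    using ishom_add[OF hg PA QA] by simp
  define inv\<sigma> where "inv\<sigma> = inv_into (ext S) \<sigma>"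
  have iv: "inv\<sigma> (\<sigma> i) = i" if "i \<in> ext S" for i unfolding inv\<sigma>_def using inj that by (simp add: inv_into_f_f)
  define pP where "pP = (\<lambda>j. if j \<in> \<sigma> ` Ps then nat (mat S (inv\<sigma> j) b) else 0)"
  define pQ where "pQ = (\<lambda>j. if j \<in> \<sigma> ` Qs then nat (- mat S (inv\<sigma> j) b) else 0)"
  have gP: "g (Pm S b) = mon ?x' (ext S') pP"
  proof -
    have "g (Pm S b) = (\<Prod>i\<in>Ps. ?x' (\<sigma> i) ^ nat (mat S i b))"
      unfolding Pm_def Ps_def[symmetric] using xA g0 unfolding Ps_def
      by (subst ishom_prodpow[OF hg]) (auto intro: prod.cong)
    also have "\<dots> = (\<Prod>j\<in>\<sigma> ` Ps. ?x' j ^ nat (mat S (inv\<sigma> j) b))"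
      using inj iv unfolding Ps_def
      by (subst prod.reindex) (auto intro: inj_on_subset intro!: prod.cong)
    also have "\<dots> = mon ?x' (ext S') pP" unfolding pP_def
      by (rule prod_sub_mon[OF fS']) (use sb in \<open>auto simp: Ps_def dest: bij_betwE\<close>)
    finally show ?thesis .
  qed
  have gQ: "g (Qm S b) = mon ?x' (ext S') pQ"
  proof -
    have "g (Qm S b) = (\<Prod>i\<in>Qs. ?x' (\<sigma> i) ^ nat (- mat S i b))"
      unfolding Qm_def Qs_def[symmetric] using xA g0 unfolding Qs_def
      by (subst ishom_prodpow[OF hg]) (auto intro: prod.cong)
    also have "\<dots> = (\<Prod>j\<in>\<sigma> ` Qs. ?x' j ^ nat (- mat S (inv\<sigma> j) b))"
      using inj iv unfolding Qs_def
      by (subst prod.reindex) (auto intro: inj_on_subset intro!: prod.cong)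
    also have "\<dots> = mon ?x' (ext S') pQ" unfolding pQ_def
      by (rule prod_sub_mon[OF fS']) (use sb in \<open>auto simp: Qs_def dest: bij_betwE\<close>)
    finally show ?thesis .
  qed
  define p' where "p' = (\<lambda>i. if i \<in> {i\<in>ext S'. mat S' i (\<sigma> b) > 0} then nat (mat S' i (\<sigma> b)) else 0)"
  define q' where "q' = (\<lambda>i. if i \<in> {i\<in>ext S'. mat S' i (\<sigma> b) < 0} then nat (- mat S' i (\<sigma> b)) else 0)"
  have eqm: "mon ?x' (ext S') pP + mon ?x' (ext S') pQ = mon ?x' (ext S') p' + mon ?x' (ext S') q'"
    using e unfolding gP gQ Pm_mon[OF fS'] Qm_mon[OF fS'] p'_def q'_def .
  have sp1: "supp_in pP (ext S')" "supp_in pQ (ext S')"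
    unfolding supp_in_def pP_def pQ_def Ps_def Qs_def using sb by (auto dest: bij_betwE)
  have sp2: "supp_in p' (ext S')" "supp_in q' (ext S')" unfolding supp_in_def p'_def q'_def by auto
  have pr: "(pP = p' \<and> pQ = q') \<or> (pP = q' \<and> pQ = p')"
    by (rule alg_indep_pair[OF valid_ai[OF vS'] sp1 sp2 eqm])
  have "\<sigma> a \<notin> \<sigma> ` Ps"
  proof
    assume "\<sigma> a \<in> \<sigma> ` Ps"
    then obtain i where i: "i \<in> Ps" "\<sigma> a = \<sigma> i" by blast
    then have "a = i" using inj a unfolding Ps_def by (auto dest: inj_onD)
    then show False using i z unfolding Ps_def by simp
  qed
  moreover have "\<sigma> a \<notin> \<sigma> ` Qs"
  proof
    assume "\<sigma> a \<in> \<sigma> ` Qs"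
    then obtain i where i: "i \<in> Qs" "\<sigma> a = \<sigma> i" by blast
    then have "a = i" using inj a unfolding Qs_def by (auto dest: inj_onD)
    then show False using i z unfolding Qs_def by simp
  qed
  ultimately have "pP (\<sigma> a) = 0" "pQ (\<sigma> a) = 0" unfolding pP_def pQ_def by auto
  then have "p' (\<sigma> a) = 0" "q' (\<sigma> a) = 0" using pr by auto
  then have "\<not> mat S' (\<sigma> a) (\<sigma> b) > 0" "\<not> mat S' (\<sigma> a) (\<sigma> b) < 0"
    unfolding p'_def q'_def using saI by (auto split: if_splits)
  then show ?thesis by simp
qed

lemma subseed_simps[simp]:
  "cl (subseed S I0 I1) = cl S" "mat (subseed S I0 I1) = mat S"
  "ex (subseed S I0 I1) = ex S - (I0 \<union> I1)" "fr (subseed S I0 I1) = (fr S \<union> I0) - I1"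
  unfolding subseed_def by simp_all

lemma ext_subseed: "I0 \<subseteq> ex S \<Longrightarrow> ext (subseed S I0 I1) = ext S - I1"
  unfolding ext_def by auto

lemma mutate_subseed:
  assumes I0: "I0 \<subseteq> ex S" and k: "k \<in> ex S - (I0 \<union> I1)" and Z: "\<forall>x\<in>I1. mat S x k = 0"
  shows "mutate k (subseed S I0 I1) = subseed (mutate k S) I0 I1"
proof -
  have e: "ext (subseed S I0 I1) = ext S - I1" by (rule ext_subseed[OF I0])
  have P: "Pm (subseed S I0 I1) k = Pm S k" unfolding Pm_def e subseed_simps
    by (rule prod.cong) (use Z in auto)
  have Q: "Qm (subseed S I0 I1) k = Qm S k" unfolding Qm_def e subseed_simps
    by (rule prod.cong) (use Z in auto)
  show ?thesis
  proof (rule seed.equality)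
    show "cl (mutate k (subseed S I0 I1)) = cl (subseed (mutate k S) I0 I1)"
      unfolding cl_mutate[of k "subseed S I0 I1"] P Q by (simp add: cl_mutate)
    show "mat (mutate k (subseed S I0 I1)) = mat (subseed (mutate k S) I0 I1)"
      by (simp add: fun_eq_iff mat_mutate)
  qed (simp_all add: mutate_def subseed_def)
qed

lemma Z_mutate:
  assumes Z: "\<forall>x\<in>I1. \<forall>y\<in>ex S - (I0 \<union> I1). mat S x y = 0" and k: "k \<in> ex S - (I0 \<union> I1)"
  shows "\<forall>x\<in>I1. \<forall>y\<in>ex S - (I0 \<union> I1). mat (mutate k S) x y = 0"
proof (intro ballI)
  fix x y assume x: "x \<in> I1" and y: "y \<in> ex S - (I0 \<union> I1)"
  have "x \<noteq> k" using x k by auto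
  moreover have "mat S x k = 0" "mat S x y = 0" using Z x k y by auto
  ultimately show "mat (mutate k S) x y = 0" unfolding mat_mutate Xm_def by auto
qed

lemma mutseq_subseed:
  "I0 \<subseteq> ex S \<Longrightarrow> set ks \<subseteq> ex S - (I0 \<union> I1) \<Longrightarrow>
   \<forall>x\<in>I1. \<forall>y\<in>ex S - (I0 \<union> I1). mat S x y = 0 \<Longrightarrow>
   mutseq ks (subseed S I0 I1) = subseed (mutseq ks S) I0 I1"
proof (induction ks arbitrary: S)
  case Nil then show ?case by simp
next
  case (Cons k ks)
  have k: "k \<in> ex S - (I0 \<union> I1)" using Cons.prems by auto
  have "mutseq (k # ks) (subseed S I0 I1) = mutseq ks (subseed (mutate k S) I0 I1)"
    using mutate_subseed[OF Cons.prems(1) k] Cons.prems(3) k by simp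
  also have "\<dots> = subseed (mutseq ks (mutate k S)) I0 I1"
    using Cons.IH[of "mutate k S"] Cons.prems Z_mutate[OF Cons.prems(3) k] by simp
  finally show ?case by simp
qed

lemma cvars_subseed:
  assumes I0: "I0 \<subseteq> ex S" and Z: "\<forall>x\<in>I1. \<forall>y\<in>ex S - (I0 \<union> I1). mat S x y = 0"
  shows "cvars (subseed S I0 I1) = (\<Union>ks\<in>{ks. set ks \<subseteq> ex S - (I0 \<union> I1)}. cl (mutseq ks S) ` (ext S - I1))"
proof -
  have "mclass (subseed S I0 I1) = (\<lambda>ks. subseed (mutseq ks S) I0 I1) ` {ks. set ks \<subseteq> ex S - (I0 \<union> I1)}"
  proof (intro set_eqI iffI)
    fix T assume "T \<in> mclass (subseed S I0 I1)"
    then obtain ks where "T = mutseq ks (subseed S I0 I1)" "set ks \<subseteq> ex S - (I0 \<union> I1)"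
      unfolding mclass_def by auto
    then show "T \<in> (\<lambda>ks. subseed (mutseq ks S) I0 I1) ` {ks. set ks \<subseteq> ex S - (I0 \<union> I1)}"
      using mutseq_subseed[OF I0 _ Z] by auto
  next
    fix T assume "T \<in> (\<lambda>ks. subseed (mutseq ks S) I0 I1) ` {ks. set ks \<subseteq> ex S - (I0 \<union> I1)}"
    then obtain ks where "T = subseed (mutseq ks S) I0 I1" "set ks \<subseteq> ex S - (I0 \<union> I1)" by auto
    then show "T \<in> mclass (subseed S I0 I1)" unfolding mclass_def
      using mutseq_subseed[OF I0 _ Z] by (intro CollectI exI[of _ ks]) auto
  qed
  moreover have "ext (subseed (mutseq ks S) I0 I1) = ext S - I1" for ks
    using ext_subseed[of I0 "mutseq ks S" I1] I0 by simp
  ultimately show ?thesis unfolding cvars_def by auto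
qed

lemma lists_image: "set ys \<subseteq> f ` A \<Longrightarrow> \<exists>xs. set xs \<subseteq> A \<and> ys = map f xs"
proof (induction ys)
  case Nil then show ?case by simp
next
  case (Cons y ys)
  then obtain xs where xs: "set xs \<subseteq> A" "ys = map f xs" by auto
  obtain x where "x \<in> A" "y = f x" using Cons.prems by auto
  then show ?case using xs by (intro exI[of _ "x # xs"]) auto
qed

lemma hom_rat:
  assumes h: "ishom g (cluster_alg S0)"
  shows "g (of_rat q) = of_rat q"
proof -
  let ?A = "cluster_alg S0"
  have inA: "of_rat r \<in> ?A" for r by (rule cluster_alg_closed(3))
  have g0: "g 0 = 0"
  proof -
    have "g (0 + 0) = g 0 + g 0" using ishom_add[OF h inA[of 0] inA[of 0]] by simp
    then show ?thesis by simp
  qed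
  have gn: "g (of_nat n) = of_nat n" for n
  proof (induction n)
    case 0 then show ?case using g0 by simp
  next
    case (Suc n)
    have "g (of_nat n + 1) = g (of_nat n) + g 1"
      using ishom_add[OF h inA[of "of_nat n"] inA[of 1]] by simp
    then show ?case using Suc ishom_1[OF h] by (simp add: add.commute)
  qed
  have ia: "(of_int j :: 'a) \<in> ?A" for j using inA[of "of_int j"] by simp
  have gi: "g (of_int i) = of_int i" for i
  proof (cases "i \<ge> 0")
    case True
    then have "of_int i = (of_nat (nat i) :: 'a)" by simp
    then show ?thesis using gn[of "nat i"] True by simp
  next
    case False
    have "g (of_int i + of_int (- i)) = g (of_int i) + g (of_int (- i))"
      using ishom_add[OF h ia[of i] ia[of "- i"]] by simp
    moreover have "(of_int (- i) :: 'a) = of_nat (nat (- i))" using False by simp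
    ultimately have "0 = g (of_int i) + of_int (- i)" using g0 gn[of "nat (- i)"] by simp
    then show ?thesis by (simp add: eq_neg_iff_add_eq_0)
  qed
  obtain n d where nd: "quotient_of q = (n, d)" by (cases "quotient_of q")
  have dpos: "d > 0" using quotient_of_denom_pos[OF nd] .
  have qq: "(of_rat q :: 'a) = of_int n / of_int d" using quotient_of_div[OF nd]
    by (simp add: of_rat_divide)
  have "(of_rat q :: 'a) * of_int d = of_int n" using qq dpos by simp
  then have "g (of_rat q) * g (of_int d) = g (of_int n)"
    using ishom_mult[OF h inA[of q] ia[of d]] by simp
  then have "g (of_rat q) * of_int d = of_int n" using gi by simp
  then have "g (of_rat q) = of_int n / of_int d" using dpos by (simp add: eq_divide_eq)
  then show ?thesis using qq by simp
qed

lemma qalg_img: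
  assumes h: "ishom g (cluster_alg S0)" and G: "G \<subseteq> cluster_alg S0"
  shows "g ` qalg G = qalg (g ` G)"
proof
  have sub: "qalg G \<subseteq> cluster_alg S0" using qalg_sub[of G "cvars S0"] G unfolding cluster_alg_def by simp
  show "g ` qalg G \<subseteq> qalg (g ` G)"
  proof
    fix y assume "y \<in> g ` qalg G"
    then obtain x where x: "x \<in> qalg G" "y = g x" by blast
    have "g x \<in> qalg (g ` G)" using x(1)
    proof (induction rule: qalg.induct)
      case (gen x) then show ?case by (auto intro: qalg.gen)
    next
      case (rat q) then show ?case using hom_rat[OF h] by (simp add: qalg.rat)
    next
      case (add x y)
      have "x \<in> cluster_alg S0" "y \<in> cluster_alg S0" using add.hyps sub by auto
      then have "g (x + y) = g x + g y" by (rule ishom_add[OF h])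
      then show ?case using add.IH by (simp add: qalg.add)
    next
      case (mult x y)
      have "x \<in> cluster_alg S0" "y \<in> cluster_alg S0" using mult.hyps sub by auto
      then have "g (x * y) = g x * g y" by (rule ishom_mult[OF h])
      then show ?case using mult.IH by (simp add: qalg.mult)
    qed
    then show "y \<in> qalg (g ` G)" using x by simp
  qed
  show "qalg (g ` G) \<subseteq> g ` qalg G"
  proof
    fix y assume "y \<in> qalg (g ` G)"
    then show "y \<in> g ` qalg G"
    proof (induction rule: qalg.induct)
      case (gen x) then show ?case by (auto intro: qalg.gen)
    next
      case (rat q) then show ?case using hom_rat[OF h, of q] by (metis image_eqI qalg.rat)
    next
      case (add y1 y2)
      then obtain x1 x2 where xx: "x1 \<in> qalg G" "x2 \<in> qalg G" "y1 = g x1" "y2 = g x2" by blast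
      then have "g (x1 + x2) = y1 + y2" using ishom_add[OF h, of x1 x2] sub by auto
      moreover have "x1 + x2 \<in> qalg G" using xx by (simp add: qalg.add)
      ultimately show ?case by (metis image_eqI)
    next
      case (mult y1 y2)
      then obtain x1 x2 where xx: "x1 \<in> qalg G" "x2 \<in> qalg G" "y1 = g x1" "y2 = g x2" by blast
      then have "g (x1 * x2) = y1 * y2" using ishom_mult[OF h, of x1 x2] sub by auto
      moreover have "x1 * x2 \<in> qalg G" using xx by (simp add: qalg.mult)
      ultimately show ?case by (metis image_eqI)
    qed
  qed
qed

lemma ishom_subset: "ishom g A \<Longrightarrow> B \<subseteq> A \<Longrightarrow> ishom g B"
  unfolding ishom_def by blast

lemma image_subseed:
  assumes v: "valid_seed S0" and g: "g \<in> Aut S0" and cs: "cluster_subseed S0 S1"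
  shows "\<exists>S2. cluster_subseed S0 S2 \<and> cluster_alg S2 = g ` cluster_alg S1 \<and> cluster_iso S1 S2 g"
proof -
  let ?A = "cluster_alg S0"
  obtain S I0 I1 where S: "S \<in> mclass S0" and I0: "I0 \<subseteq> ex S" and I1: "I1 \<subseteq> ext S"
    and dis: "I0 \<inter> I1 = {}" and S1: "S1 = subseed S I0 I1"
    and Z0: "\<forall>x\<in>I1. \<forall>y\<in>ex S1. mat S x y = 0" and sub1: "cluster_alg S1 \<subseteq> ?A"
    using cs unfolding cluster_subseed_def by (elim bexE exE conjE)
  define E1 where "E1 = ex S - (I0 \<union> I1)"
  have exS1: "ex S1 = E1" unfolding S1 E1_def by simp
  have Z: "\<forall>x\<in>I1. \<forall>y\<in>ex S - (I0 \<union> I1). mat S x y = 0" using Z0 exS1 unfolding E1_def by simp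
  obtain S' \<sigma> where S': "S' \<in> mclass S0" and c: "compat g S S' \<sigma>"
    using compat_any[OF v g S] by blast
  have sb: "bij_betw \<sigma> (ext S) (ext S')" and se: "\<sigma> ` ex S = ex S'" using c unfolding compat_def by auto
  have inj: "inj_on \<sigma> (ext S)" and sext: "\<sigma> ` ext S = ext S'" using sb by (auto simp: bij_betw_def)
  have exT: "ex S \<subseteq> ext S" unfolding ext_def by auto
  have call: "\<And>ks i. set ks \<subseteq> ex S \<Longrightarrow> i \<in> ext S \<Longrightarrow>
      g (cl (mutseq ks S) i) = cl (mutseq (map \<sigma> ks) S') (\<sigma> i)"
    using c unfolding compat_def by blast
  define S2 where "S2 = subseed S' (\<sigma> ` I0) (\<sigma> ` I1)"
  have I0': "\<sigma> ` I0 \<subseteq> ex S'" using se I0 by auto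
  have I1': "\<sigma> ` I1 \<subseteq> ext S'" using sext I1 by auto
  have E1': "ex S' - (\<sigma> ` I0 \<union> \<sigma> ` I1) = \<sigma> ` E1"
  proof -
    have "\<sigma> ` E1 = \<sigma> ` ex S - \<sigma> ` (I0 \<union> I1)" unfolding E1_def
      by (rule inj_on_image_set_diff[OF inj]) (use I0 I1 exT in auto)
    then show ?thesis using se by (simp add: image_Un)
  qed
  have ext1: "\<sigma> ` (ext S - I1) = ext S' - \<sigma> ` I1"
    using inj_on_image_set_diff[OF inj _ I1] sext by auto
  have disj': "\<sigma> ` I0 \<inter> \<sigma> ` I1 = {}"
    using inj_on_image_Int[OF inj, of I0 I1] dis I0 I1 exT by auto
  have Z'': "\<forall>x\<in>\<sigma> ` I1. \<forall>y\<in>\<sigma> ` E1. mat S' x y = 0"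
  proof (intro ballI)
    fix x y assume "x \<in> \<sigma> ` I1" "y \<in> \<sigma> ` E1"
    then obtain a b where ab: "a \<in> I1" "b \<in> E1" "x = \<sigma> a" "y = \<sigma> b" by blast
    have z: "mat S a b = 0" using Z ab unfolding E1_def by blast
    have "a \<in> ext S" "b \<in> ex S" using ab I1 unfolding E1_def by auto
    from mat_transport[OF v g S S' c this z] show "mat S' x y = 0" unfolding ab(3,4) .
  qed
  have Z': "\<forall>x\<in>\<sigma> ` I1. \<forall>y\<in>ex S' - (\<sigma> ` I0 \<union> \<sigma> ` I1). mat S' x y = 0"
    using Z'' unfolding E1' .
  have exS2: "ex S2 = \<sigma> ` E1" unfolding S2_def using E1' by simp
  have extS1: "ext S1 = ext S - I1" unfolding S1 by (rule ext_subseed[OF I0])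
  have extS2: "ext S2 = \<sigma> ` (ext S - I1)" unfolding S2_def ext1 by (rule ext_subseed[OF I0'])
  have mS1: "mutseq ks S1 = subseed (mutseq ks S) I0 I1" if "set ks \<subseteq> E1" for ks
    unfolding S1 by (rule mutseq_subseed[OF I0 _ Z]) (use that E1_def in simp)
  have mS2: "mutseq ks S2 = subseed (mutseq ks S') (\<sigma> ` I0) (\<sigma> ` I1)" if "set ks \<subseteq> \<sigma> ` E1" for ks
    unfolding S2_def by (rule mutseq_subseed[OF I0' _ Z']) (use that E1' in simp)
  have cv1: "cvars S1 = (\<Union>ks\<in>{ks. set ks \<subseteq> E1}. cl (mutseq ks S) ` (ext S - I1))"
    unfolding S1 cvars_subseed[OF I0 Z] E1_def ..
  have cv2: "cvars S2 = (\<Union>ks\<in>{ks. set ks \<subseteq> \<sigma> ` E1}. cl (mutseq ks S') ` (\<sigma> ` (ext S - I1)))"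
    unfolding S2_def cvars_subseed[OF I0' Z'] E1' ext1 ..
  have gc: "g ` cvars S1 = cvars S2"
  proof
    show "g ` cvars S1 \<subseteq> cvars S2"
    proof
      fix y assume "y \<in> g ` cvars S1"
      then obtain ks i where ks: "set ks \<subseteq> E1" and i: "i \<in> ext S - I1" and y: "y = g (cl (mutseq ks S) i)"
        unfolding cv1 by blast
      have "set ks \<subseteq> ex S" using ks unfolding E1_def by auto
      then have "y = cl (mutseq (map \<sigma> ks) S') (\<sigma> i)" using y call[of ks i] i by simp
      moreover have "set (map \<sigma> ks) \<subseteq> \<sigma> ` E1" using ks by auto
      ultimately show "y \<in> cvars S2" unfolding cv2 using i by blast
    qed
    show "cvars S2 \<subseteq> g ` cvars S1"
    proof
      fix y assume "y \<in> cvars S2"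
      then obtain ks' i where ks': "set ks' \<subseteq> \<sigma> ` E1" and i: "i \<in> ext S - I1"
        and y: "y = cl (mutseq ks' S') (\<sigma> i)" unfolding cv2 by blast
      obtain ks where ks: "set ks \<subseteq> E1" "ks' = map \<sigma> ks" using lists_image[OF ks'] by blast
      have "set ks \<subseteq> ex S" using ks(1) unfolding E1_def by auto
      then have "y = g (cl (mutseq ks S) i)" using y call[of ks i] ks(2) i by simp
      moreover have "cl (mutseq ks S) i \<in> cvars S1" unfolding cv1 using ks i by blast
      ultimately show "y \<in> g ` cvars S1" by blast
    qed
  qed
  have cvA: "cvars S1 \<subseteq> ?A" using sub1 unfolding cluster_alg_def by (auto intro: qalg.gen)
  have hg: "ishom g ?A" using Aut_D(2)[OF g] .
  have gb: "bij_betw g ?A ?A" using Aut_D(1)[OF g] .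
  have alg: "cluster_alg S2 = g ` cluster_alg S1"
    unfolding cluster_alg_def gc[symmetric] using qalg_img[OF hg cvA] by simp
  have sub2: "cluster_alg S2 \<subseteq> ?A" using alg sub1 gb by (auto simp: bij_betw_def)
  have csub2: "cluster_subseed S0 S2" unfolding cluster_subseed_def
    using S' I0' I1' disj' Z'' sub2 exS2 unfolding S2_def by (intro bexI[OF _ S'] exI[of _ "\<sigma> ` I0"] exI[of _ "\<sigma> ` I1"]) auto
  have "compat g S1 S2 \<sigma>" unfolding compat_def
  proof (intro conjI allI impI ballI)
    have "inj_on \<sigma> (ext S - I1)" using inj by (rule inj_on_subset) auto
    then show "bij_betw \<sigma> (ext S1) (ext S2)" unfolding extS1 extS2 by (simp add: bij_betw_def)
    show "\<sigma> ` ex S1 = ex S2" unfolding exS1 exS2 ..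
    fix ks i assume ks: "set ks \<subseteq> ex S1" and i: "i \<in> ext S1"
    have ks1: "set ks \<subseteq> E1" using ks exS1 by simp
    have ks2: "set (map \<sigma> ks) \<subseteq> \<sigma> ` E1" using ks1 by auto
    have "g (cl (mutseq ks S1) i) = g (cl (mutseq ks S) i)" using mS1[OF ks1] by simp
    also have "\<dots> = cl (mutseq (map \<sigma> ks) S') (\<sigma> i)"
    proof -
      have "set ks \<subseteq> ex S" using ks1 unfolding E1_def by auto
      moreover have "i \<in> ext S" using i extS1 by auto
      ultimately show ?thesis by (rule call)
    qed
    also have "\<dots> = cl (mutseq (map \<sigma> ks) S2) (\<sigma> i)" using mS2[OF ks2] by simp
    finally show "g (cl (mutseq ks S1) i) = cl (mutseq (map \<sigma> ks) S2) (\<sigma> i)" .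
  qed
  moreover have "bij_betw g (cluster_alg S1) (cluster_alg S2)"
    using alg inj_on_subset[of g ?A "cluster_alg S1"] gb sub1 by (auto simp: bij_betw_def)
  moreover have "ishom g (cluster_alg S1)" by (rule ishom_subset[OF hg sub1])
  ultimately have "cluster_iso S1 S2 g" unfolding cluster_iso_alt
    using mclass_self[of S1] mclass_self[of S2] by blast
  then show ?thesis using csub2 alg by blast
qed

lemma conj_cj: "conjugate S0 H1 H2 \<longleftrightarrow> (\<exists>g\<in>Aut S0. H2 = cj S0 g ` H1)"
  unfolding conjugate_def cj_def ..

theorem theoremA:
  fixes S0 :: "('a::field_char_0) seed"
    and H1 H2 :: "('a \<Rightarrow> 'a) set"
  assumes "valid_seed S0"
    and "aut_subgroup S0 H1" and "aut_subgroup S0 H2"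
    and "M_sub S0 H1 \<noteq> {}" and "M_sub S0 H2 \<noteq> {}"
  shows "conjugate S0 H1 H2 \<longleftrightarrow>
    (\<exists>f\<in>Aut S0. \<exists>S1 S2. cluster_subseed S0 S1 \<and> cluster_subseed S0 S2 \<and>
       cluster_alg S1 \<in> M_sub S0 H1 \<and> cluster_alg S2 \<in> M_sub S0 H2 \<and>
       f ` cluster_alg S1 = cluster_alg S2 \<and> cluster_iso S1 S2 f)"
proof
  note v = assms(1)
  assume "conjugate S0 H1 H2"
  then obtain g where g: "g \<in> Aut S0" and H2: "H2 = cj S0 g ` H1" unfolding conj_cj by blast
  have gi: "aut_inv S0 g \<in> Aut S0" by (rule Aut_inv[OF v g])
  obtain B1 where B1: "B1 \<in> M_sub S0 H1" using assms(4) by blast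
  then obtain S1 where cs1: "cluster_subseed S0 S1" and B1S: "B1 = cluster_alg S1"
    unfolding M_sub_def cluster_subalgs_def by blast
  have B1fix: "B1 \<subseteq> fixalg S0 H1" and B1max: "\<And>C. C \<in> cluster_subalgs S0 \<Longrightarrow> C \<subseteq> fixalg S0 H1 \<Longrightarrow> B1 \<subseteq> C \<Longrightarrow> C = B1"
    and B1gal: "Gal S0 B1 = H1" using B1 unfolding M_sub_def by auto
  obtain S2 where cs2: "cluster_subseed S0 S2" and alg2: "cluster_alg S2 = g ` cluster_alg S1"
    and iso: "cluster_iso S1 S2 g" using image_subseed[OF v g cs1] by blast
  have fixH2: "fixalg S0 H2 = g ` fixalg S0 H1" unfolding H2 by (rule fixalg_img[OF v g])
  have gg: "g ` (aut_inv S0 g ` X) = X" for X using aut_inv_f(2)[OF g] by (simp add: image_comp comp_def)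
  have gg': "aut_inv S0 g ` (g ` X) = X" for X using aut_inv_f(1)[OF g] by (simp add: image_comp comp_def)
  have "cluster_alg S2 \<in> M_sub S0 H2" unfolding M_sub_def
  proof (intro CollectI conjI ballI impI)
    show "cluster_alg S2 \<in> cluster_subalgs S0" unfolding cluster_subalgs_def using cs2 by blast
    show "cluster_alg S2 \<subseteq> fixalg S0 H2" unfolding fixH2 alg2 B1S[symmetric] using B1fix by blast
    show "Gal S0 (cluster_alg S2) = H2" unfolding alg2 B1S[symmetric] Gal_img[OF v g] B1gal H2 ..
    fix C assume C: "C \<in> cluster_subalgs S0" and Cfix: "C \<subseteq> fixalg S0 H2" and CS2: "cluster_alg S2 \<subseteq> C"
    obtain S3 where cs3: "cluster_subseed S0 S3" and CS3: "C = cluster_alg S3"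
      using C unfolding cluster_subalgs_def by blast
    obtain S4 where cs4: "cluster_subseed S0 S4" and alg4: "cluster_alg S4 = aut_inv S0 g ` cluster_alg S3"
      using image_subseed[OF v gi cs3] by blast
    have "cluster_alg S4 \<in> cluster_subalgs S0" unfolding cluster_subalgs_def using cs4 by blast
    moreover have "cluster_alg S4 \<subseteq> fixalg S0 H1"
      using Cfix unfolding alg4 CS3[symmetric] fixH2 by (metis gg' image_mono)
    moreover have "B1 \<subseteq> cluster_alg S4"
      using CS2 unfolding alg4 CS3[symmetric] alg2 B1S[symmetric] by (metis gg' image_mono)
    ultimately have "cluster_alg S4 = B1" by (rule B1max)
    then have "aut_inv S0 g ` C = B1" unfolding alg4 CS3 .
    then have "C = g ` B1" using gg[of C] by simp
    then show "C = cluster_alg S2" unfolding alg2 B1S .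
  qed
  then show "\<exists>f\<in>Aut S0. \<exists>S1 S2. cluster_subseed S0 S1 \<and> cluster_subseed S0 S2 \<and>
       cluster_alg S1 \<in> M_sub S0 H1 \<and> cluster_alg S2 \<in> M_sub S0 H2 \<and>
       f ` cluster_alg S1 = cluster_alg S2 \<and> cluster_iso S1 S2 f"
    using g cs1 cs2 B1 B1S alg2 iso by blast
next
  note v = assms(1)
  assume "\<exists>f\<in>Aut S0. \<exists>S1 S2. cluster_subseed S0 S1 \<and> cluster_subseed S0 S2 \<and>
       cluster_alg S1 \<in> M_sub S0 H1 \<and> cluster_alg S2 \<in> M_sub S0 H2 \<and>
       f ` cluster_alg S1 = cluster_alg S2 \<and> cluster_iso S1 S2 f"
  then obtain f S1 S2 where f: "f \<in> Aut S0" and m1: "cluster_alg S1 \<in> M_sub S0 H1"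
    and m2: "cluster_alg S2 \<in> M_sub S0 H2" and im: "f ` cluster_alg S1 = cluster_alg S2" by blast
  have "H2 = Gal S0 (cluster_alg S2)" using m2 unfolding M_sub_def by auto
  also have "\<dots> = cj S0 f ` Gal S0 (cluster_alg S1)" unfolding im[symmetric] by (rule Gal_img[OF v f])
  also have "Gal S0 (cluster_alg S1) = H1" using m1 unfolding M_sub_def by auto
  finally show "conjugate S0 H1 H2" unfolding conj_cj using f by blast
qed

end
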